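(* Let $E=(d_0,d_1)$ with $-\infty\le d_0<d_1\le\infty$, equipped with Lebesgue measure, and $L^1=L^1(E)$. Let $g\colon E\to\mathbb{R}$ be continuous and strictly positive and let $\varphi\ge0$ be Borel measurable and integrable on compact subsets of $E$. Let $\lambda>0$, $Q_\lambda=\lambda G+Q$ (with $G,Q$ as in the context), and define \[ R_\lambda v(x)=\int_{d_0}^{d_1}\mathbf{1}_{(d_0,x)}(y)\frac{e^{Q_\lambda(y)-Q_\lambda(x)}}{g(x)}v(y)\,dy,\quad v\in L^1,\ x\in E. \] Then $\lambda\|R_\lambda v\|\le\|v\|$ for all $v\in L^1$. Moreover, for every $v\in L^1$ we have $gR_\lambda v\in AC$ and $u=R_\lambda v$ is a solution in $L^1$ of the equation $\lambda u-Au=v$, where $Au=-\frac{d}{dx}(gu)-\varphi u$.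
   Context: $AC$ denotes the space of absolutely continuous functions on $E$. $G(x)=\int_{x_0}^x\frac{dz}{g(z)}$ and $Q(x)=\int_{x_1}^x\frac{\varphi(z)}{g(z)}dz$, where $x_0=d_0$ (resp. $x_1=d_0$) if the corresponding integral is finite for all $x\in E$, and otherwise $x_0$ (resp. $x_1$) is a fixed point of $E$. *)

theory Defs
  imports "HOL-Analysis.Analysis"
begin

definition abs_cont_on_interval :: "real \<Rightarrow> real \<Rightarrow> (real \<Rightarrow> real) \<Rightarrow> bool" where
  "abs_cont_on_interval a b f \<longleftrightarrow>
     (\<forall>\<epsilon>>0. \<exists>\<delta>>0. \<forall>(n::nat) (s::nat \<Rightarrow> real) (t::nat \<Rightarrow> real).
        (\<forall>i<n. a \<le> s i \<and> s i \<le> t i \<and> t i \<le> b) \<and>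
        (\<forall>i<n. \<forall>j<n. i \<noteq> j \<longrightarrow> t i \<le> s j \<or> t j \<le> s i) \<and>
        (\<Sum>i<n. t i - s i) < \<delta>
        \<longrightarrow> (\<Sum>i<n. \<bar>f (t i) - f (s i)\<bar>) < \<epsilon>)"

definition AC_on :: "real set \<Rightarrow> (real \<Rightarrow> real) \<Rightarrow> bool" where
  "AC_on E f \<longleftrightarrow> (\<forall>a b. a \<in> E \<longrightarrow> b \<in> E \<longrightarrow> a \<le> b \<longrightarrow> abs_cont_on_interval a b f)"

definition base_point :: "ereal \<Rightarrow> ereal \<Rightarrow> real \<Rightarrow> (real \<Rightarrow> real) \<Rightarrow> ereal" where
  "base_point d0 d1 c h =
     (if (\<forall>x\<in>einterval d0 d1. interval_lebesgue_integrable lborel d0 (ereal x) h)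
      then d0 else ereal c)"

definition primitive :: "ereal \<Rightarrow> ereal \<Rightarrow> real \<Rightarrow> (real \<Rightarrow> real) \<Rightarrow> real \<Rightarrow> real" where
  "primitive d0 d1 c h x = interval_lebesgue_integral lborel (base_point d0 d1 c h) (ereal x) h"

definition Gfun :: "ereal \<Rightarrow> ereal \<Rightarrow> real \<Rightarrow> (real \<Rightarrow> real) \<Rightarrow> real \<Rightarrow> real" where
  "Gfun d0 d1 x0 g = primitive d0 d1 x0 (\<lambda>z. 1 / g z)"

definition Qfun :: "ereal \<Rightarrow> ereal \<Rightarrow> real \<Rightarrow> (real \<Rightarrow> real) \<Rightarrow> (real \<Rightarrow> real) \<Rightarrow> real \<Rightarrow> real" where
  "Qfun d0 d1 x1 g \<phi> = primitive d0 d1 x1 (\<lambda>z. \<phi> z / g z)"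

definition Qlam :: "ereal \<Rightarrow> ereal \<Rightarrow> real \<Rightarrow> real \<Rightarrow> (real \<Rightarrow> real) \<Rightarrow> (real \<Rightarrow> real) \<Rightarrow> real \<Rightarrow> real \<Rightarrow> real" where
  "Qlam d0 d1 x0 x1 g \<phi> lam x = lam * Gfun d0 d1 x0 g x + Qfun d0 d1 x1 g \<phi> x"

definition Rlam :: "ereal \<Rightarrow> ereal \<Rightarrow> real \<Rightarrow> real \<Rightarrow> (real \<Rightarrow> real) \<Rightarrow> (real \<Rightarrow> real) \<Rightarrow> real
                     \<Rightarrow> (real \<Rightarrow> real) \<Rightarrow> real \<Rightarrow> real" where
  "Rlam d0 d1 x0 x1 g \<phi> lam v x =
     (LINT y:einterval d0 d1|lebesgue.
        indicator (einterval d0 (ereal x)) y *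
        (exp (Qlam d0 d1 x0 x1 g \<phi> lam y - Qlam d0 d1 x0 x1 g \<phi> lam x) / g x) * v y)"

end

theory Submission
  imports Defs
begin


lemma lebdiff_aux:
  fixes f :: "real \<Rightarrow> real"
  assumes "f absolutely_integrable_on {a..b}"
  obtains N where "negligible N"
    "\<And>x e. x \<notin> N \<Longrightarrow> 0 < e \<Longrightarrow> \<exists>d>0. \<forall>k. 0 < k \<and> k < d \<longrightarrow>
        \<bar>integral {x..x+k} (\<lambda>t. if t \<in> {a..b} then f t else 0) / k - (if x \<in> {a..b} then f x else 0)\<bar> < e
      \<and> \<bar>integral {x-k..x} (\<lambda>t. if t \<in> {a..b} then f t else 0) / k - (if x \<in> {a..b} then f x else 0)\<bar> < e"
proof -
  let ?f = "\<lambda>t. if t \<in> {a..b} then f t else 0"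
  let ?g = "\<lambda>t. ?f (-t)"
  have "f integrable_on {a..b}" using assms set_lebesgue_integral_eq_integral(1) by blast
  then have U: "?f integrable_on UNIV" using integrable_restrict_UNIV by blast
  have I1: "\<And>c d::real. ?f integrable_on cbox c d"
    using integrable_on_subcbox[OF U] by blast
  have I2: "\<And>c d::real. ?g integrable_on cbox c d"
  proof -
    fix c d :: real
    have "?f integrable_on {-d..- c}" using I1 by (metis cbox_interval)
    then show "?g integrable_on cbox c d" using Henstock_Kurzweil_Integration.integrable_reflect_real[where f="?f" and a="-d" and b="-c"]
      by (simp add: cbox_interval)
  qed
  from integrable_ccontinuous_explicit[of ?f, OF I1] obtain N1 where
    N1: "negligible N1" "\<And>x e. \<lbrakk>x \<notin> N1; 0 < e\<rbrakk> \<Longrightarrow>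
               \<exists>d>0. \<forall>h. 0 < h \<and> h < d \<longrightarrow>
                         norm(integral (cbox x (x + h *\<^sub>R One)) ?f /\<^sub>R h ^ DIM(real) - ?f x) < e"
    by blast
  from integrable_ccontinuous_explicit[of ?g, OF I2] obtain N2 where
    N2: "negligible N2" "\<And>x e. \<lbrakk>x \<notin> N2; 0 < e\<rbrakk> \<Longrightarrow>
               \<exists>d>0. \<forall>h. 0 < h \<and> h < d \<longrightarrow>
                         norm(integral (cbox x (x + h *\<^sub>R One)) ?g /\<^sub>R h ^ DIM(real) - ?g x) < e"
    by blast
  have negN2: "negligible (uminus ` N2)"
    apply (rule negligible_locally_Lipschitz_image[OF _ N2(1), of uminus])
     apply simp
    apply (rule_tac x=UNIV in exI, rule_tac x=1 in exI) by auto
  show ?thesis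
  proof (rule that[of "N1 \<union> uminus ` N2"])
    show "negligible (N1 \<union> uminus ` N2)" using N1(1) negN2 by auto
    fix x e :: real assume x: "x \<notin> N1 \<union> uminus ` N2" and e: "0 < e"
    have "-x \<notin> N2" using x by (metis UnI2 image_eqI minus_minus)
    from N2(2)[OF this e] obtain d2 where d2: "d2>0" "\<forall>h. 0 < h \<and> h < d2 \<longrightarrow>
                         norm(integral (cbox (-x) (-x + h *\<^sub>R One)) ?g /\<^sub>R h ^ DIM(real) - ?g (-x)) < e"
      by blast
    from N1(2)[of x e] x e obtain d1 where d1: "d1>0" "\<forall>h. 0 < h \<and> h < d1 \<longrightarrow>
                         norm(integral (cbox x (x + h *\<^sub>R One)) ?f /\<^sub>R h ^ DIM(real) - ?f x) < e"
      by blast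
    show "\<exists>d>0. \<forall>k. 0 < k \<and> k < d \<longrightarrow>
        \<bar>integral {x..x+k} ?f / k - ?f x\<bar> < e \<and> \<bar>integral {x-k..x} ?f / k - ?f x\<bar> < e"
    proof (intro exI[of _ "min d1 d2"] conjI allI impI)
      show "0 < min d1 d2" using d1 d2 by simp
      fix k :: real assume k: "0 < k \<and> k < min d1 d2"
      show "\<bar>integral {x..x+k} ?f / k - ?f x\<bar> < e"
        using d1(2)[rule_format, of k] k by (simp add: cbox_interval divide_inverse mult.commute)
      have "integral {-x..-x+k} ?g = integral {x-k..x} ?f"
        using Henstock_Kurzweil_Integration.integral_reflect_real[where f="?f" and a="x-k" and b=x] by simp
      then show "\<bar>integral {x-k..x} ?f / k - ?f x\<bar> < e"
        using d2(2)[rule_format, of k] k by (auto simp add: cbox_interval divide_inverse mult.commute split: if_splits)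
    qed
  qed
qed

lemma lebdiff:
  fixes f :: "real \<Rightarrow> real"
  assumes fi: "f absolutely_integrable_on {a..b}"
  obtains N where "negligible N"
    "\<And>x. x \<in> {a<..<b} - N \<Longrightarrow> ((\<lambda>u. integral {a..u} f) has_real_derivative f x) (at x)"
proof -
  obtain N where N: "negligible N"
    "\<And>x e. x \<notin> N \<Longrightarrow> 0 < e \<Longrightarrow> \<exists>d>0. \<forall>k. 0 < k \<and> k < d \<longrightarrow>
        \<bar>integral {x..x+k} (\<lambda>t. if t \<in> {a..b} then f t else 0) / k - (if x \<in> {a..b} then f x else 0)\<bar> < e
      \<and> \<bar>integral {x-k..x} (\<lambda>t. if t \<in> {a..b} then f t else 0) / k - (if x \<in> {a..b} then f x else 0)\<bar> < e"
    using lebdiff_aux[OF fi] by blast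
  have fI: "f integrable_on {a..b}" using fi set_lebesgue_integral_eq_integral(1) by blast
  have ic: "\<And>c d. a \<le> c \<Longrightarrow> d \<le> b \<Longrightarrow> integral {c..d} (\<lambda>t. if t \<in> {a..b} then f t else 0) = integral {c..d} f"
    by (rule integral_cong) auto
  have comb: "\<And>y z. a \<le> y \<Longrightarrow> y \<le> z \<Longrightarrow> z \<le> b \<Longrightarrow> integral {a..z} f - integral {a..y} f = integral {y..z} f"
  proof -
    fix y z assume "a \<le> y" "y \<le> z" "z \<le> b"
    have "f integrable_on {a..z}" using fI integrable_on_subinterval \<open>z \<le> b\<close> by fastforce
    then show "integral {a..z} f - integral {a..y} f = integral {y..z} f"
      using Henstock_Kurzweil_Integration.integral_combine[of a y z f] \<open>a \<le> y\<close> \<open>y \<le> z\<close> by simp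
  qed
  show ?thesis
  proof (rule that[OF N(1)])
    fix x assume x: "x \<in> {a<..<b} - N"
    let ?F = "\<lambda>u. integral {a..u} f"
    have "((\<lambda>y. (?F y - ?F x) / (y - x)) \<longlongrightarrow> f x) (at x)"
    proof (rule filterlim_split_at; unfold tendsto_iff dist_real_def; intro allI impI)
      fix e :: real assume e: "0 < e"
      obtain d where d: "d > 0" "\<forall>k. 0 < k \<and> k < d \<longrightarrow>
        \<bar>integral {x..x+k} (\<lambda>t. if t \<in> {a..b} then f t else 0) / k - (if x \<in> {a..b} then f x else 0)\<bar> < e
      \<and> \<bar>integral {x-k..x} (\<lambda>t. if t \<in> {a..b} then f t else 0) / k - (if x \<in> {a..b} then f x else 0)\<bar> < e"
        using N(2)[of x e] x e by blast
      show "\<forall>\<^sub>F y in at_right x. \<bar>(?F y - ?F x) / (y - x) - f x\<bar> < e"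
        unfolding eventually_at_right_field
      proof (intro exI[of _ "x + min d (b - x)"] conjI allI impI)
        show "x < x + min d (b - x)" using d x by auto
        fix y assume y: "x < y" "y < x + min d (b - x)"
        have "?F y - ?F x = integral {x..x+(y-x)} f" using comb[of x y] x y by auto
        also have "\<dots> = integral {x..x+(y-x)} (\<lambda>t. if t \<in> {a..b} then f t else 0)"
          using ic[of x "x+(y-x)"] x y by auto
        finally show "\<bar>(?F y - ?F x) / (y - x) - f x\<bar> < e"
          using d(2)[rule_format, of "y-x"] x y by auto
      qed
      show "\<forall>\<^sub>F y in at_left x. \<bar>(?F y - ?F x) / (y - x) - f x\<bar> < e"
        unfolding eventually_at_left_field
      proof (intro exI[of _ "x - min d (x - a)"] conjI allI impI)
        show "x - min d (x - a) < x" using d x by auto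
        fix y assume y: "x - min d (x - a) < y" "y < x"
        have "?F x - ?F y = integral {x-(x-y)..x} f" using comb[of y x] x y by auto
        also have "\<dots> = integral {x-(x-y)..x} (\<lambda>t. if t \<in> {a..b} then f t else 0)"
          using ic[of "x-(x-y)" x] x y by auto
        finally have "(?F y - ?F x) / (y - x) = integral {x-(x-y)..x} (\<lambda>t. if t \<in> {a..b} then f t else 0) / (x - y)"
          by (smt (verit, ccfv_threshold) minus_divide_divide)
        then show "\<bar>(?F y - ?F x) / (y - x) - f x\<bar> < e"
          using d(2)[rule_format, of "x-y"] x y by auto
      qed
    qed
    then show "(?F has_real_derivative f x) (at x)"
      using has_field_derivative_iff by blast
  qed
qed

lemma lebdiff_E:
  fixes h \<Phi> :: "real \<Rightarrow> real" and d0 d1 :: ereal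
  assumes "d0 < d1"
  and hi: "\<And>a b. a \<in> einterval d0 d1 \<Longrightarrow> b \<in> einterval d0 d1 \<Longrightarrow> h absolutely_integrable_on {a..b}"
  and \<Phi>: "\<And>a u. a \<in> einterval d0 d1 \<Longrightarrow> u \<in> einterval d0 d1 \<Longrightarrow> a \<le> u \<Longrightarrow> \<Phi> u - \<Phi> a = integral {a..u} h"
  obtains N where "negligible N" "\<And>x. x \<in> einterval d0 d1 - N \<Longrightarrow> (\<Phi> has_real_derivative h x) (at x)"
proof -
  obtain l u :: "nat \<Rightarrow> real" where ul:
    "einterval d0 d1 = (\<Union>i. {l i .. u i})"
    "incseq u" "decseq l" "\<And>i. l i < u i" "\<And>i. d0 < l i" "\<And>i. u i < d1"
    "l \<longlonglongrightarrow> d0" "u \<longlonglongrightarrow> d1"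
    by (rule einterval_Icc_approximation[OF \<open>d0 < d1\<close>]) blast
  have luE: "l i \<in> einterval d0 d1" "u i \<in> einterval d0 d1" for i
  proof -
    have "ereal (l i) < ereal (u i)" using ul(4) by simp
    then show "l i \<in> einterval d0 d1" "u i \<in> einterval d0 d1"
      using ul(5,6)[of i] unfolding einterval_iff by (meson less_trans)+
  qed
  have "\<forall>i. \<exists>N. negligible N \<and> (\<forall>x\<in>{l i<..<u i} - N. ((\<lambda>y. integral {l i..y} h) has_real_derivative h x) (at x))"
  proof
    fix i
    obtain N where "negligible N"
      "\<And>x. x \<in> {l i<..<u i} - N \<Longrightarrow> ((\<lambda>y. integral {l i..y} h) has_real_derivative h x) (at x)"
      using lebdiff[OF hi[OF luE(1)[of i] luE(2)[of i]]] by blast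
    then show "\<exists>N. negligible N \<and> (\<forall>x\<in>{l i<..<u i} - N. ((\<lambda>y. integral {l i..y} h) has_real_derivative h x) (at x))"
      by blast
  qed
  from choice[OF this] obtain NN where NN0: "\<forall>i. negligible (NN i) \<and> (\<forall>x\<in>{l i<..<u i} - NN i. ((\<lambda>y. integral {l i..y} h) has_real_derivative h x) (at x))"
    by blast
  then have NN: "\<And>i. negligible (NN i)"
    "\<And>i x. x\<in>{l i<..<u i} - NN i \<Longrightarrow> ((\<lambda>y. integral {l i..y} h) has_real_derivative h x) (at x)"
    by blast+
  show ?thesis
  proof (rule that[of "\<Union>i. NN i"])
    show "negligible (\<Union>i. NN i)" using NN(1) negligible_Union_nat by blast
    fix x assume x: "x \<in> einterval d0 d1 - (\<Union>i. NN i)"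
    have "eventually (\<lambda>i. ereal (l i) < ereal x) sequentially"
      using order_tendstoD(2)[OF ul(7), of "ereal x"] x by (auto simp: einterval_iff)
    moreover have "eventually (\<lambda>i. ereal x < ereal (u i)) sequentially"
      using order_tendstoD(1)[OF ul(8), of "ereal x"] x by (auto simp: einterval_iff)
    ultimately have "eventually (\<lambda>i. ereal (l i) < ereal x \<and> ereal x < ereal (u i)) sequentially"
      by (rule eventually_conj)
    then obtain i where "ereal (l i) < ereal x \<and> ereal x < ereal (u i)"
      unfolding eventually_sequentially by blast
    then have i: "l i < x" "x < u i" by auto
    have d: "((\<lambda>y. \<Phi> (l i) + integral {l i..y} h) has_real_derivative h x) (at x)"
      using NN(2)[of x i] i x by (auto intro!: derivative_eq_intros)
    show "(\<Phi> has_real_derivative h x) (at x)"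
    proof (rule has_field_derivative_transform_within_open[OF d, of "{l i<..<u i}"])
      show "open {l i<..<u i}" by simp
      show "x \<in> {l i<..<u i}" using i by simp
      fix y assume y: "y \<in> {l i<..<u i}"
      have "y \<in> einterval d0 d1" using y ul(1) by (auto intro!: exI[of _ i])
      then show "\<Phi> (l i) + integral {l i..y} h = \<Phi> y"
        using \<Phi>[OF luE(1)[of i], of y] y by auto
    qed
  qed
qed




lemma AC_cong:
  assumes "\<And>x. x \<in> {a..b} \<Longrightarrow> f x = f' x" "abs_cont_on_interval a b f"
  shows "abs_cont_on_interval a b f'"
proof -
  { fix n :: nat and s t :: "nat \<Rightarrow> real"
    assume "\<forall>i<n. a \<le> s i \<and> s i \<le> t i \<and> t i \<le> b"
    then have "(\<Sum>i<n. \<bar>f' (t i) - f' (s i)\<bar>) = (\<Sum>i<n. \<bar>f (t i) - f (s i)\<bar>)"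
      using assms(1) by (intro sum.cong) auto }
  note eq = this
  show ?thesis unfolding abs_cont_on_interval_def
  proof (intro allI impI)
    fix e :: real assume e: "0 < e"
    from assms(2)[unfolded abs_cont_on_interval_def, rule_format, OF e] obtain d where d: "d > 0"
      "\<forall>(n::nat) (s::nat \<Rightarrow> real) (t::nat \<Rightarrow> real).
        (\<forall>i<n. a \<le> s i \<and> s i \<le> t i \<and> t i \<le> b) \<and>
        (\<forall>i<n. \<forall>j<n. i \<noteq> j \<longrightarrow> t i \<le> s j \<or> t j \<le> s i) \<and>
        (\<Sum>i<n. t i - s i) < d
        \<longrightarrow> (\<Sum>i<n. \<bar>f (t i) - f (s i)\<bar>) < e" by blast
    show "\<exists>d>0. \<forall>(n::nat) (s::nat \<Rightarrow> real) (t::nat \<Rightarrow> real).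
        (\<forall>i<n. a \<le> s i \<and> s i \<le> t i \<and> t i \<le> b) \<and>
        (\<forall>i<n. \<forall>j<n. i \<noteq> j \<longrightarrow> t i \<le> s j \<or> t j \<le> s i) \<and>
        (\<Sum>i<n. t i - s i) < d
        \<longrightarrow> (\<Sum>i<n. \<bar>f' (t i) - f' (s i)\<bar>) < e"
    proof (intro exI[of _ d] conjI allI impI)
      fix n :: nat and s t :: "nat \<Rightarrow> real"
      assume H: "(\<forall>i<n. a \<le> s i \<and> s i \<le> t i \<and> t i \<le> b) \<and>
        (\<forall>i<n. \<forall>j<n. i \<noteq> j \<longrightarrow> t i \<le> s j \<or> t j \<le> s i) \<and>
        (\<Sum>i<n. t i - s i) < d"
      show "(\<Sum>i<n. \<bar>f' (t i) - f' (s i)\<bar>) < e"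
        using d(2)[rule_format, OF H] eq[of n s t] H by simp
    qed (use d in simp)
  qed
qed

lemma indicator_sum_le1:
  fixes s t :: "nat \<Rightarrow> real"
  assumes "\<forall>i<n. \<forall>j<n. i \<noteq> j \<longrightarrow> t i \<le> s j \<or> t j \<le> s i"
  shows "(\<Sum>i<n. indicator {s i<..t i} x) \<le> (1::real)"
proof (cases "\<exists>i<n. x \<in> {s i<..t i}")
  case False
  then have "(\<Sum>i<n. indicator {s i<..t i} x) = (0::real)"
    by (intro sum.neutral) (auto simp: indicator_def)
  then show ?thesis by simp
next
  case True
  then obtain i where i: "i < n" "x \<in> {s i<..t i}" by blast
  have "(\<Sum>j<n. indicator {s j<..t j} x) = (\<Sum>j\<in>{i}. indicator {s j<..t j} x :: real)"
  proof (rule sum.mono_neutral_right)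
    show "\<forall>j\<in>{..<n} - {i}. indicator {s j<..t j} x = (0::real)"
    proof
      fix j assume "j \<in> {..<n} - {i}"
      then have "t i \<le> s j \<or> t j \<le> s i" using assms i by auto
      then show "indicator {s j<..t j} x = (0::real)" using i by (auto simp: indicator_def)
    qed
  qed (use i in auto)
  then show ?thesis using i by simp
qed

lemma AC_int:
  fixes h \<Phi> :: "real \<Rightarrow> real"
  assumes hi: "h absolutely_integrable_on {a..b}"
  and \<Phi>: "\<And>s t. a \<le> s \<Longrightarrow> s \<le> t \<Longrightarrow> t \<le> b \<Longrightarrow> \<Phi> t - \<Phi> s = integral {s..t} h"
  shows "abs_cont_on_interval a b \<Phi>"
proof -
  have [measurable]: "(\<lambda>x::real. x) \<in> borel_measurable lebesgue"
    by (rule measurable_completion) simp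
  have mi: "\<And>(A::real set) (f::real\<Rightarrow>real). A \<in> sets lebesgue \<Longrightarrow> integrable lebesgue f \<Longrightarrow> integrable lebesgue (\<lambda>x. indicator A x * f x :: real)"
  proof -
    fix A :: "real set" and f :: "real \<Rightarrow> real" assume "A \<in> sets lebesgue" "integrable lebesgue f"
    from integrable_mult_indicator[OF this] show "integrable lebesgue (\<lambda>x. indicator A x * f x :: real)" by simp
  qed
  define k where "k x = indicator {a..b} x * \<bar>h x\<bar>" for x
  have ki: "integrable lebesgue k"
    using set_integrable_abs[OF hi] unfolding k_def set_integrable_def by simp
  have kb: "k \<in> borel_measurable lebesgue" using ki by auto
  have k0: "0 \<le> k x" for x unfolding k_def by auto
  define kn where "kn n x = min (k x) (real n)" for n x
  have knb: "kn n \<in> borel_measurable lebesgue" for n unfolding kn_def using kb by measurable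
  have knle: "\<And>n. AE x in lebesgue. norm (kn n x) \<le> k x" unfolding kn_def using k0 by auto
  have knlim: "AE x in lebesgue. (\<lambda>n. kn n x) \<longlonglongrightarrow> k x"
  proof (rule AE_I2)
    fix x
    have "eventually (\<lambda>n. kn n x = k x) sequentially"
      unfolding eventually_sequentially kn_def
    proof (intro exI[of _ "nat \<lceil>k x\<rceil>"] allI impI)
      fix n assume "nat \<lceil>k x\<rceil> \<le> n"
      then have "k x \<le> real n" by linarith
      then show "min (k x) (real n) = k x" by simp
    qed
    then show "(\<lambda>n. kn n x) \<longlonglongrightarrow> k x" by (rule tendsto_eventually)
  qed
  have kni: "integrable lebesgue (kn n)" for n
    using integrable_dominated_convergence2[OF kb knb ki knlim knle] .
  have lim: "(\<lambda>n. integral\<^sup>L lebesgue (kn n)) \<longlonglongrightarrow> integral\<^sup>L lebesgue k"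
    using integral_dominated_convergence[OF kb knb ki knlim knle] .
  have step: "\<bar>\<Phi> t - \<Phi> s\<bar> \<le> integral\<^sup>L lebesgue (\<lambda>x. indicator {s<..t} x * k x)"
    if st: "a \<le> s" "s \<le> t" "t \<le> b" for s t
  proof -
    have sub: "set_integrable lebesgue {s..t} h"
      by (rule set_integrable_subset[OF hi]) (use st in auto)
    have "\<Phi> t - \<Phi> s = (LINT x:{s..t}|lebesgue. h x)"
      using \<Phi>[OF st] set_lebesgue_integral_eq_integral(2)[OF sub] by simp
    then have "\<bar>\<Phi> t - \<Phi> s\<bar> \<le> (LINT x:{s..t}|lebesgue. \<bar>h x\<bar>)"
      using set_integral_norm_bound[OF sub] by simp
    also have "\<dots> = integral\<^sup>L lebesgue (\<lambda>x. indicator {s<..t} x * k x)"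
      unfolding set_lebesgue_integral_def
    proof (rule integral_cong_AE)
      show "(\<lambda>x. indicator {s..t} x *\<^sub>R \<bar>h x\<bar>) \<in> borel_measurable lebesgue"
        using set_integrable_abs[OF sub] unfolding set_integrable_def by auto
      show "(\<lambda>x. indicator {s<..t} x * k x) \<in> borel_measurable lebesgue"
        using kb by measurable
      have "AE x in lebesgue. x \<noteq> s" by (rule AE_completion[OF AE_lborel_singleton])
      then show "AE x in lebesgue. indicator {s..t} x *\<^sub>R \<bar>h x\<bar> = indicator {s<..t} x * k x"
        by eventually_elim (use st in \<open>auto simp: k_def indicator_def\<close>)
    qed
    finally show ?thesis .
  qed
  show ?thesis unfolding abs_cont_on_interval_def
  proof (intro allI impI)
    fix e :: real assume e: "0 < e"
    have "eventually (\<lambda>n. integral\<^sup>L lebesgue k - e/2 < integral\<^sup>L lebesgue (kn n)) sequentially"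
      using order_tendstoD(1)[OF lim, of "integral\<^sup>L lebesgue k - e/2"] e by simp
    then obtain N0 where "\<forall>n\<ge>N0. integral\<^sup>L lebesgue k - e/2 < integral\<^sup>L lebesgue (kn n)"
      unfolding eventually_sequentially by blast
    then have "integral\<^sup>L lebesgue k - e/2 < integral\<^sup>L lebesgue (kn N0)" by blast
    then obtain N where N: "integral\<^sup>L lebesgue k - integral\<^sup>L lebesgue (kn N) < e/2" by (intro that[of N0]) simp
    define d where "d = e / (2 * (real N + 1))"
    have d0: "d > 0" using e by (simp add: d_def)
    have Nd: "real N * d \<le> e/2"
    proof -
      have "real N * d = (e/2) * (real N / (real N + 1))" by (simp add: d_def field_simps)
      also have "\<dots> \<le> (e/2) * 1" using e by (intro mult_left_mono) auto
      finally show ?thesis by simp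
    qed
    show "\<exists>d>0. \<forall>(n::nat) (s::nat \<Rightarrow> real) (t::nat \<Rightarrow> real).
        (\<forall>i<n. a \<le> s i \<and> s i \<le> t i \<and> t i \<le> b) \<and>
        (\<forall>i<n. \<forall>j<n. i \<noteq> j \<longrightarrow> t i \<le> s j \<or> t j \<le> s i) \<and>
        (\<Sum>i<n. t i - s i) < d
        \<longrightarrow> (\<Sum>i<n. \<bar>\<Phi> (t i) - \<Phi> (s i)\<bar>) < e"
    proof (intro exI[of _ d] conjI allI impI)
      show "0 < d" by (rule d0)
      fix n :: nat and s t :: "nat \<Rightarrow> real"
      assume H: "(\<forall>i<n. a \<le> s i \<and> s i \<le> t i \<and> t i \<le> b) \<and>
        (\<forall>i<n. \<forall>j<n. i \<noteq> j \<longrightarrow> t i \<le> s j \<or> t j \<le> s i) \<and>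
        (\<Sum>i<n. t i - s i) < d"
      define J where "J x = (\<Sum>i<n. indicator {s i<..t i} x :: real)" for x
      have J1: "J x \<le> 1" for x unfolding J_def by (rule indicator_sum_le1) (use H in blast)
      have J0: "0 \<le> J x" for x unfolding J_def by (auto intro: sum_nonneg)
      have iI: "integrable lebesgue (\<lambda>x. indicator {s i<..t i} x * k x)" for i
        by (rule mi[OF _ ki]) auto
      have iIc: "integrable lebesgue (\<lambda>x. indicator {s i<..t i} x * c)" for i and c :: real
      proof -
        have "integrable lebesgue (indicat_real {s i<..t i})"
          by (rule integrable_indicator_iff[THEN iffD2]) (cases "s i \<le> t i"; auto simp: emeasure_completion)
        then show ?thesis by simp
      qed
      have "(\<Sum>i<n. \<bar>\<Phi> (t i) - \<Phi> (s i)\<bar>) \<le> (\<Sum>i<n. integral\<^sup>L lebesgue (\<lambda>x. indicator {s i<..t i} x * k x))"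
        using H by (intro sum_mono step) auto
      also have "\<dots> = integral\<^sup>L lebesgue (\<lambda>x. J x * k x)"
        unfolding J_def sum_distrib_right by (rule Bochner_Integration.integral_sum[symmetric]) (rule iI)
      also have "\<dots> = integral\<^sup>L lebesgue (\<lambda>x. J x * (k x - kn N x)) + integral\<^sup>L lebesgue (\<lambda>x. J x * kn N x)"
      proof -
        have "integrable lebesgue (\<lambda>x. J x * kn N x)"
          unfolding J_def sum_distrib_right
          using kni[of N] by (intro Bochner_Integration.integrable_sum mi) auto
        moreover have "integrable lebesgue (\<lambda>x. J x * (k x - kn N x))"
          unfolding J_def sum_distrib_right
          using kni[of N] ki by (intro Bochner_Integration.integrable_sum mi) auto
        ultimately show ?thesis by (subst Bochner_Integration.integral_add[symmetric]) (auto simp: algebra_simps)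
      qed
      also have "\<dots> \<le> integral\<^sup>L lebesgue (\<lambda>x. k x - kn N x) + integral\<^sup>L lebesgue (\<lambda>x. J x * real N)"
      proof (rule add_mono)
        show "integral\<^sup>L lebesgue (\<lambda>x. J x * (k x - kn N x)) \<le> integral\<^sup>L lebesgue (\<lambda>x. k x - kn N x)"
        proof (rule Bochner_Integration.integral_mono)
          show "integrable lebesgue (\<lambda>x. J x * (k x - kn N x))"
            unfolding J_def sum_distrib_right
            using kni[of N] ki by (intro Bochner_Integration.integrable_sum mi) auto
          show "integrable lebesgue (\<lambda>x. k x - kn N x)" using kni[of N] ki by auto
          fix x
          have "0 \<le> k x - kn N x" unfolding kn_def by simp
          then show "J x * (k x - kn N x) \<le> k x - kn N x"
            using J1[of x] by (simp add: mult_left_le_one_le J0)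
        qed
        show "integral\<^sup>L lebesgue (\<lambda>x. J x * kn N x) \<le> integral\<^sup>L lebesgue (\<lambda>x. J x * real N)"
        proof (rule Bochner_Integration.integral_mono)
          show "integrable lebesgue (\<lambda>x. J x * kn N x)"
            unfolding J_def sum_distrib_right
            using kni[of N] by (intro Bochner_Integration.integrable_sum mi) auto
          show "integrable lebesgue (\<lambda>x. J x * real N)"
            unfolding J_def sum_distrib_right using iIc by (intro Bochner_Integration.integrable_sum) auto
          fix x show "J x * kn N x \<le> J x * real N"
            using J0[of x] by (intro mult_left_mono) (auto simp: kn_def)
        qed
      qed
      also have "integral\<^sup>L lebesgue (\<lambda>x. J x * real N) = real N * (\<Sum>i<n. t i - s i)"
      proof -
        have "integral\<^sup>L lebesgue (\<lambda>x. J x * real N) = (\<Sum>i<n. integral\<^sup>L lebesgue (\<lambda>x. indicator {s i<..t i} x * real N))"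
          unfolding J_def sum_distrib_right by (rule Bochner_Integration.integral_sum) (rule iIc)
        also have "\<dots> = (\<Sum>i<n. real N * (t i - s i))"
          using H by (intro sum.cong refl) (auto simp: measure_completion)
        finally show ?thesis by (simp add: sum_distrib_left)
      qed
      also have "integral\<^sup>L lebesgue (\<lambda>x. k x - kn N x) = integral\<^sup>L lebesgue k - integral\<^sup>L lebesgue (kn N)"
        using ki kni[of N] by simp
      finally have "(\<Sum>i<n. \<bar>\<Phi> (t i) - \<Phi> (s i)\<bar>) \<le> integral\<^sup>L lebesgue k - integral\<^sup>L lebesgue (kn N) + real N * (\<Sum>i<n. t i - s i)" .
      moreover have "real N * (\<Sum>i<n. t i - s i) \<le> real N * d"
        using H by (intro mult_left_mono) auto
      ultimately show "(\<Sum>i<n. \<bar>\<Phi> (t i) - \<Phi> (s i)\<bar>) < e" using N Nd by linarith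
    qed
  qed
qed

lemma AC_comb:
  fixes f g H :: "real \<Rightarrow> real"
  assumes f: "abs_cont_on_interval a b f" and g: "abs_cont_on_interval a b g"
    and A: "A \<ge> 0" and B: "B \<ge> 0"
    and bnd: "\<And>s t. s \<in> {a..b} \<Longrightarrow> t \<in> {a..b} \<Longrightarrow> \<bar>H t - H s\<bar> \<le> A * \<bar>f t - f s\<bar> + B * \<bar>g t - g s\<bar>"
  shows "abs_cont_on_interval a b H"
  unfolding abs_cont_on_interval_def
proof (intro allI impI)
  fix e :: real assume e: "0 < e"
  define e' where "e' = e / (2 * (A + B + 1))"
  have e': "e' > 0" using e A B by (simp add: e'_def)
  obtain d1 where d1: "d1 > 0" "\<forall>(n::nat) (s::nat \<Rightarrow> real) (t::nat \<Rightarrow> real).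
        (\<forall>i<n. a \<le> s i \<and> s i \<le> t i \<and> t i \<le> b) \<and>
        (\<forall>i<n. \<forall>j<n. i \<noteq> j \<longrightarrow> t i \<le> s j \<or> t j \<le> s i) \<and>
        (\<Sum>i<n. t i - s i) < d1
        \<longrightarrow> (\<Sum>i<n. \<bar>f (t i) - f (s i)\<bar>) < e'"
    using f[unfolded abs_cont_on_interval_def, rule_format, OF e'] by blast
  obtain d2 where d2: "d2 > 0" "\<forall>(n::nat) (s::nat \<Rightarrow> real) (t::nat \<Rightarrow> real).
        (\<forall>i<n. a \<le> s i \<and> s i \<le> t i \<and> t i \<le> b) \<and>
        (\<forall>i<n. \<forall>j<n. i \<noteq> j \<longrightarrow> t i \<le> s j \<or> t j \<le> s i) \<and>
        (\<Sum>i<n. t i - s i) < d2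
        \<longrightarrow> (\<Sum>i<n. \<bar>g (t i) - g (s i)\<bar>) < e'"
    using g[unfolded abs_cont_on_interval_def, rule_format, OF e'] by blast
  show "\<exists>d>0. \<forall>(n::nat) (s::nat \<Rightarrow> real) (t::nat \<Rightarrow> real).
        (\<forall>i<n. a \<le> s i \<and> s i \<le> t i \<and> t i \<le> b) \<and>
        (\<forall>i<n. \<forall>j<n. i \<noteq> j \<longrightarrow> t i \<le> s j \<or> t j \<le> s i) \<and>
        (\<Sum>i<n. t i - s i) < d
        \<longrightarrow> (\<Sum>i<n. \<bar>H (t i) - H (s i)\<bar>) < e"
  proof (intro exI[of _ "min d1 d2"] conjI allI impI)
    show "0 < min d1 d2" using d1 d2 by simp
    fix n :: nat and s t :: "nat \<Rightarrow> real"
    assume H: "(\<forall>i<n. a \<le> s i \<and> s i \<le> t i \<and> t i \<le> b) \<and>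
        (\<forall>i<n. \<forall>j<n. i \<noteq> j \<longrightarrow> t i \<le> s j \<or> t j \<le> s i) \<and>
        (\<Sum>i<n. t i - s i) < min d1 d2"
    have sf: "(\<Sum>i<n. \<bar>f (t i) - f (s i)\<bar>) < e'" using d1(2) H by auto
    have sg: "(\<Sum>i<n. \<bar>g (t i) - g (s i)\<bar>) < e'" using d2(2) H by auto
    have "(\<Sum>i<n. \<bar>H (t i) - H (s i)\<bar>) \<le> (\<Sum>i<n. A * \<bar>f (t i) - f (s i)\<bar> + B * \<bar>g (t i) - g (s i)\<bar>)"
      using H by (intro sum_mono bnd) auto
    also have "\<dots> = A * (\<Sum>i<n. \<bar>f (t i) - f (s i)\<bar>) + B * (\<Sum>i<n. \<bar>g (t i) - g (s i)\<bar>)"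
      by (simp add: sum.distrib sum_distrib_left)
    also have "\<dots> \<le> A * e' + B * e'"
      using sf sg A B by (intro add_mono mult_left_mono) auto
    also have "\<dots> < e"
    proof -
      have "A * e' + B * e' = e * ((A + B) / (2 * (A + B + 1)))" by (simp add: e'_def add_divide_distrib[symmetric] algebra_simps)
      also have "\<dots> < e * 1" using e A B by (intro mult_strict_left_mono) auto
      finally show ?thesis by simp
    qed
    finally show "(\<Sum>i<n. \<bar>H (t i) - H (s i)\<bar>) < e" .
  qed
qed

lemma AC_mult:
  fixes f g :: "real \<Rightarrow> real"
  assumes f: "abs_cont_on_interval a b f" and g: "abs_cont_on_interval a b g"
    and M: "\<And>x. x \<in> {a..b} \<Longrightarrow> \<bar>f x\<bar> \<le> M" "\<And>x. x \<in> {a..b} \<Longrightarrow> \<bar>g x\<bar> \<le> M" and "a \<le> b"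
  shows "abs_cont_on_interval a b (\<lambda>x. f x * g x)"
proof (rule AC_comb[OF g f])
  show M0: "0 \<le> M" using M(1)[of a] \<open>a \<le> b\<close> by auto
  then show "0 \<le> M" .
  fix s t assume st: "s \<in> {a..b}" "t \<in> {a..b}"
  have "f t * g t - f s * g s = f t * (g t - g s) + g s * (f t - f s)" by (simp add: algebra_simps)
  then have "\<bar>f t * g t - f s * g s\<bar> \<le> \<bar>f t\<bar> * \<bar>g t - g s\<bar> + \<bar>g s\<bar> * \<bar>f t - f s\<bar>"
    by (metis abs_mult abs_triangle_ineq)
  also have "\<dots> \<le> M * \<bar>g t - g s\<bar> + M * \<bar>f t - f s\<bar>"
    using M st by (intro add_mono mult_right_mono) auto
  finally show "\<bar>f t * g t - f s * g s\<bar> \<le> M * \<bar>g t - g s\<bar> + M * \<bar>f t - f s\<bar>" .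
qed

lemma AC_lip:
  fixes f F :: "real \<Rightarrow> real"
  assumes f: "abs_cont_on_interval a b f" and L: "L \<ge> 0"
    and bnd: "\<And>s t. s \<in> {a..b} \<Longrightarrow> t \<in> {a..b} \<Longrightarrow> \<bar>F t - F s\<bar> \<le> L * \<bar>f t - f s\<bar>"
  shows "abs_cont_on_interval a b F"
  by (rule AC_comb[OF f f L order_refl[of 0]]) (use bnd in simp)

lemma exp_lip:
  fixes x y M :: real
  assumes "x \<le> M" "y \<le> M"
  shows "\<bar>exp x - exp y\<bar> \<le> exp M * \<bar>x - y\<bar>"
proof -
  have key: "exp u - exp v \<le> exp M * (u - v)" if "v \<le> u" "u \<le> M" for u v :: real
  proof -
    have "1 - (u - v) \<le> exp (-(u - v))" using exp_ge_add_one_self[of "-(u-v)"] by linarith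
    then have "exp u * (1 - (u - v)) \<le> exp u * exp (-(u-v))" by (intro mult_left_mono) auto
    also have "exp u * exp (-(u-v)) = exp v" by (simp add: exp_add[symmetric])
    finally have "exp u - exp v \<le> exp u * (u - v)" by (simp add: algebra_simps)
    also have "\<dots> \<le> exp M * (u - v)" using that by (intro mult_right_mono) auto
    finally show ?thesis .
  qed
  show ?thesis
  proof (cases "y \<le> x")
    case True then show ?thesis using key[of y x] assms by auto
  next
    case False then show ?thesis using key[of x y] assms by auto
  qed
qed




lemma lb2leb:
  fixes f :: "real \<Rightarrow> real"
  assumes "set_integrable lborel S f"
  shows "f absolutely_integrable_on S"
proof -
  have m: "(\<lambda>x. indicator S x *\<^sub>R f x) \<in> borel_measurable lborel"
    using assms unfolding set_integrable_def by auto
  show ?thesis using assms integrable_completion[OF m] unfolding set_integrable_def by simp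
qed

lemma Icc_sub_einterval:
  assumes "a \<in> einterval d0 d1" "b \<in> einterval d0 d1"
  shows "{a..b} \<subseteq> einterval d0 d1"
proof
  fix x assume "x \<in> {a..b}"
  then have "ereal a \<le> ereal x" "ereal x \<le> ereal b" by auto
  then show "x \<in> einterval d0 d1" using assms unfolding einterval_iff
    by (meson order.strict_trans1 order.strict_trans2)
qed

lemma around:
  assumes "x \<in> einterval d0 d1"
  obtains a b where "a \<in> einterval d0 d1" "b \<in> einterval d0 d1" "a < x" "x < b"
proof -
  obtain e where e: "e > 0" "ball x e \<subseteq> einterval d0 d1"
    using open_contains_ball_eq[OF open_einterval] assms by blast
  have "x - e/2 \<in> ball x e" "x + e/2 \<in> ball x e" using e by (auto simp: dist_real_def)
  then show ?thesis using e by (intro that[of "x - e/2" "x + e/2"]) auto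
qed

lemma cont_int_E:
  fixes h \<Phi> :: "real \<Rightarrow> real"
  assumes hi: "\<And>a b. a \<in> einterval d0 d1 \<Longrightarrow> b \<in> einterval d0 d1 \<Longrightarrow> h integrable_on {a..b}"
  and \<Phi>: "\<And>a u. a \<in> einterval d0 d1 \<Longrightarrow> u \<in> einterval d0 d1 \<Longrightarrow> a \<le> u \<Longrightarrow> \<Phi> u - \<Phi> a = integral {a..u} h"
  shows "continuous_on (einterval d0 d1) \<Phi>"
proof (rule continuous_at_imp_continuous_on, rule ballI)
  fix x assume x: "x \<in> einterval d0 d1"
  obtain a b where ab: "a \<in> einterval d0 d1" "b \<in> einterval d0 d1" "a < x" "x < b"
    using around[OF x] by blast
  have "continuous_on {a..b} (\<lambda>u. \<Phi> a + integral {a..u} h)"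
    by (intro continuous_intros indefinite_integral_continuous_1 hi ab)
  moreover have "\<And>u. u \<in> {a..b} \<Longrightarrow> \<Phi> a + integral {a..u} h = \<Phi> u"
  proof -
    fix u assume u: "u \<in> {a..b}"
    then have "u \<in> einterval d0 d1" using Icc_sub_einterval[OF ab(1,2)] by auto
    then show "\<Phi> a + integral {a..u} h = \<Phi> u" using \<Phi>[OF ab(1), of u] u by auto
  qed
  ultimately have "continuous_on {a..b} \<Phi>" by (rule continuous_on_eq)
  then show "isCont \<Phi> x" by (rule continuous_on_interior) (use ab in auto)
qed

locale L =
  fixes d0 d1 :: ereal and g \<phi> :: "real \<Rightarrow> real" and x0 x1 lam :: real
  assumes d01: "d0 < d1"
    and gc: "continuous_on (einterval d0 d1) g" and gpos: "\<forall>x\<in>einterval d0 d1. 0 < g x"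
    and \<phi>b: "\<phi> \<in> borel_measurable borel" and \<phi>0: "\<forall>x\<in>einterval d0 d1. 0 \<le> \<phi> x"
    and \<phi>i: "\<forall>K. compact K \<and> K \<subseteq> einterval d0 d1 \<longrightarrow> set_integrable lborel K \<phi>"
    and x0E: "x0 \<in> einterval d0 d1" and x1E: "x1 \<in> einterval d0 d1"
    and lam0: "0 < lam"

context L
begin

lemma gcI: "a \<in> einterval d0 d1 \<Longrightarrow> b \<in> einterval d0 d1 \<Longrightarrow> continuous_on {a..b} (\<lambda>z. 1 / g z)"
proof -
  assume "a \<in> einterval d0 d1" "b \<in> einterval d0 d1"
  then have sub: "{a..b} \<subseteq> einterval d0 d1" by (rule Icc_sub_einterval)
  then have "\<forall>z\<in>{a..b}. g z \<noteq> 0" using gpos by force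
  then show ?thesis using sub
    by (intro continuous_intros continuous_on_subset[OF gc]) auto
qed

lemma LI1: "a \<in> einterval d0 d1 \<Longrightarrow> b \<in> einterval d0 d1 \<Longrightarrow> set_integrable lborel {a..b} (\<lambda>z. 1 / g z)"
  unfolding set_integrable_def by (rule borel_integrable_compact) (auto intro: gcI)

lemma LI2: "a \<in> einterval d0 d1 \<Longrightarrow> b \<in> einterval d0 d1 \<Longrightarrow> set_integrable lborel {a..b} (\<lambda>z. \<phi> z / g z)"
proof -
  assume a: "a \<in> einterval d0 d1" and b: "b \<in> einterval d0 d1"
  have "compact ((\<lambda>z. 1 / g z) ` {a..b})" by (rule compact_continuous_image[OF gcI[OF a b]]) simp
  then obtain C where C: "\<forall>y\<in>(\<lambda>z. 1 / g z) ` {a..b}. norm y \<le> C"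
    using compact_imp_bounded bounded_iff by metis
  have \<phi>ab: "set_integrable lborel {a..b} \<phi>" using \<phi>i Icc_sub_einterval[OF a b] by auto
  have m1: "(\<lambda>x. indicator {a..b} x *\<^sub>R (1 / g x)) \<in> borel_measurable borel"
    by (rule borel_measurable_continuous_on_indicator) (auto intro: gcI[OF a b])
  have m2: "(\<lambda>x. indicator {a..b} x *\<^sub>R \<phi> x) \<in> borel_measurable borel"
    using \<phi>b by measurable
  show ?thesis unfolding set_integrable_def
  proof (rule Bochner_Integration.integrable_bound)
    show "integrable lborel (\<lambda>x. indicator {a..b} x *\<^sub>R (C * \<phi> x))"
      using integrable_mult_right[of C lborel "\<lambda>x. indicator {a..b} x * \<phi> x"] \<phi>ab
      unfolding set_integrable_def by (simp add: mult.left_commute)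
    have "(\<lambda>x. indicator {a..b} x *\<^sub>R (\<phi> x / g x)) = (\<lambda>x. (indicator {a..b} x *\<^sub>R \<phi> x) * (indicator {a..b} x *\<^sub>R (1 / g x)))"
      by (auto simp: indicator_def)
    moreover have "(\<lambda>x. (indicator {a..b} x *\<^sub>R \<phi> x) * (indicator {a..b} x *\<^sub>R (1 / g x))) \<in> borel_measurable borel"
      by (rule borel_measurable_times[OF m2 m1])
    ultimately show "(\<lambda>x. indicator {a..b} x *\<^sub>R (\<phi> x / g x)) \<in> borel_measurable lborel"
      by simp
    show "AE x in lborel. norm (indicator {a..b} x *\<^sub>R (\<phi> x / g x)) \<le> norm (indicator {a..b} x *\<^sub>R (C * \<phi> x))"
    proof (rule AE_I2)
      fix x show "norm (indicator {a..b} x *\<^sub>R (\<phi> x / g x)) \<le> norm (indicator {a..b} x *\<^sub>R (C * \<phi> x))"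
      proof (cases "x \<in> {a..b}")
        case True
        then have "\<bar>1 / g x\<bar> \<le> C" using C by auto
        moreover have "0 \<le> \<phi> x" using \<phi>0 Icc_sub_einterval[OF a b] True by auto
        ultimately have "\<bar>\<phi> x\<bar> * \<bar>1 / g x\<bar> \<le> \<bar>\<phi> x\<bar> * C" by (intro mult_left_mono) auto
        moreover have "0 \<le> C" using \<open>\<bar>1 / g x\<bar> \<le> C\<close> by linarith
        ultimately show ?thesis using True \<open>0 \<le> \<phi> x\<close>
          by (auto simp: abs_mult divide_inverse mult.commute)
      qed simp
    qed
  qed
qed

lemma prim_diff:
  fixes h :: "real \<Rightarrow> real" and c x y :: real
  assumes hint: "\<And>a b. a \<in> einterval d0 d1 \<Longrightarrow> b \<in> einterval d0 d1 \<Longrightarrow> set_integrable lborel {a..b} h"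
    and c: "c \<in> einterval d0 d1" and y: "y \<in> einterval d0 d1" and x: "x \<in> einterval d0 d1" and yx: "y \<le> x"
  shows "primitive d0 d1 c h x - primitive d0 d1 c h y = integral {y..x} h"
proof -
  let ?B = "base_point d0 d1 c h"
  have sub: "interval_lebesgue_integrable lborel (min ?B (min (ereal y) (ereal x))) (max ?B (max (ereal y) (ereal x))) h"
  proof (cases "\<forall>x\<in>einterval d0 d1. interval_lebesgue_integrable lborel d0 (ereal x) h")
    case True
    then have B: "?B = d0" unfolding base_point_def by simp
    have "d0 < ereal y" using y by (simp add: einterval_iff)
    moreover have "ereal y \<le> ereal x" using yx by simp
    ultimately have "d0 \<le> ereal x" "d0 \<le> ereal y" by (meson less_imp_le order.strict_trans2)+
    then have "min ?B (min (ereal y) (ereal x)) = d0" "max ?B (max (ereal y) (ereal x)) = ereal x"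
      using B yx by (auto simp: min_def max_def)
    then show ?thesis using True x by simp
  next
    case False
    then have B: "?B = ereal c" unfolding base_point_def by (simp only: if_False)
    let ?m = "min c (min y x)" and ?M = "max c (max y x)"
    have mE: "?m \<in> einterval d0 d1" and ME: "?M \<in> einterval d0 d1" using c x y by (auto simp: min_def max_def)
    have si: "set_integrable lborel {?m<..<?M} h"
      by (rule set_integrable_subset[OF hint[OF mE ME]]) auto
    have e1: "min ?B (min (ereal y) (ereal x)) = ereal ?m" and e2: "max ?B (max (ereal y) (ereal x)) = ereal ?M"
      using B by (auto simp: min_def max_def)
    have le: "ereal ?m \<le> ereal ?M" by (simp only: ereal_less_eq(3))
    show ?thesis unfolding e1 e2 interval_lebesgue_integrable_def einterval_eq_Icc
      using si le by (simp only: if_True)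
  qed
  have "(LBINT t=?B..ereal y. h t) + (LBINT t=ereal y..ereal x. h t) = (LBINT t=?B..ereal x. h t)"
    by (rule interval_integral_sum[OF sub])
  then have "primitive d0 d1 c h x - primitive d0 d1 c h y = (LBINT t=ereal y..ereal x. h t)"
    unfolding primitive_def by simp
  also have "\<dots> = (LINT t:{y<..<x}|lborel. h t)"
    using yx by (simp add: interval_lebesgue_integral_def)
  also have "\<dots> = integral {y<..<x} h"
    by (rule set_borel_integral_eq_integral(2)) (rule set_integrable_subset[OF hint[OF y x]], auto)
  also have "\<dots> = integral {y..x} h" by (simp add: integral_open_interval_real)
  finally show ?thesis .
qed

lemma int_nonneg_lb:
  fixes h :: "real \<Rightarrow> real"
  assumes "set_integrable lborel {y..x} h" "\<And>z. z \<in> {y..x} \<Longrightarrow> 0 \<le> h z"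
  shows "0 \<le> integral {y..x} h"
  by (rule integral_nonneg[OF set_borel_integral_eq_integral(1)[OF assms(1)] assms(2)])

lemma G_diff: "y \<in> einterval d0 d1 \<Longrightarrow> x \<in> einterval d0 d1 \<Longrightarrow> y \<le> x \<Longrightarrow>
    Gfun d0 d1 x0 g x - Gfun d0 d1 x0 g y = integral {y..x} (\<lambda>z. 1 / g z)"
  unfolding Gfun_def by (rule prim_diff[OF LI1 x0E])

lemma Q_diff: "y \<in> einterval d0 d1 \<Longrightarrow> x \<in> einterval d0 d1 \<Longrightarrow> y \<le> x \<Longrightarrow>
    Qfun d0 d1 x1 g \<phi> x - Qfun d0 d1 x1 g \<phi> y = integral {y..x} (\<lambda>z. \<phi> z / g z)"
  unfolding Qfun_def by (rule prim_diff[OF LI2 x1E])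

lemma Q_mono: "y \<in> einterval d0 d1 \<Longrightarrow> x \<in> einterval d0 d1 \<Longrightarrow> y \<le> x \<Longrightarrow>
    Qfun d0 d1 x1 g \<phi> y \<le> Qfun d0 d1 x1 g \<phi> x"
proof -
  assume a: "y \<in> einterval d0 d1" "x \<in> einterval d0 d1" "y \<le> x"
  have "0 \<le> integral {y..x} (\<lambda>z. \<phi> z / g z)"
  proof (rule int_nonneg_lb[OF LI2[OF a(1,2)]])
    fix z assume "z \<in> {y..x}"
    then have "z \<in> einterval d0 d1" using Icc_sub_einterval[OF a(1,2)] by auto
    then show "0 \<le> \<phi> z / g z" using gpos \<phi>0 by auto
  qed
  then show ?thesis using Q_diff[OF a] by simp
qed

definition hP where "hP z = lam * (1 / g z) + \<phi> z / g z"

lemma hP_int: "a \<in> einterval d0 d1 \<Longrightarrow> b \<in> einterval d0 d1 \<Longrightarrow> set_integrable lborel {a..b} hP"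
  unfolding hP_def using LI1 LI2 by (intro set_integral_add set_integrable_mult_right) auto

lemma P_diff: "y \<in> einterval d0 d1 \<Longrightarrow> x \<in> einterval d0 d1 \<Longrightarrow> y \<le> x \<Longrightarrow>
    Qlam d0 d1 x0 x1 g \<phi> lam x - Qlam d0 d1 x0 x1 g \<phi> lam y = integral {y..x} hP"
proof -
  assume a: "y \<in> einterval d0 d1" "x \<in> einterval d0 d1" "y \<le> x"
  have i1: "(\<lambda>z. 1 / g z) integrable_on {y..x}" using set_borel_integral_eq_integral(1)[OF LI1[OF a(1,2)]] .
  have i2: "(\<lambda>z. \<phi> z / g z) integrable_on {y..x}" using set_borel_integral_eq_integral(1)[OF LI2[OF a(1,2)]] .
  have "integral {y..x} hP = lam * integral {y..x} (\<lambda>z. 1 / g z) + integral {y..x} (\<lambda>z. \<phi> z / g z)"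
  proof -
    have i3: "(\<lambda>z. lam * (1 / g z)) integrable_on {y..x}" using integrable_cmul[OF i1, of lam] by simp
    have "integral {y..x} hP = integral {y..x} (\<lambda>z. lam * (1 / g z)) + integral {y..x} (\<lambda>z. \<phi> z / g z)"
      unfolding hP_def by (rule integral_add[OF i3 i2])
    also have "integral {y..x} (\<lambda>z. lam * (1 / g z)) = lam * integral {y..x} (\<lambda>z. 1 / g z)"
      by (rule integral_mult[OF i1, symmetric])
    finally show ?thesis .
  qed
  then show ?thesis unfolding Qlam_def using G_diff[OF a] Q_diff[OF a] by (simp add: algebra_simps)
qed

lemma P_mono_G: "y \<in> einterval d0 d1 \<Longrightarrow> x \<in> einterval d0 d1 \<Longrightarrow> y \<le> x \<Longrightarrow>
    lam * (Gfun d0 d1 x0 g x - Gfun d0 d1 x0 g y) \<le> Qlam d0 d1 x0 x1 g \<phi> lam x - Qlam d0 d1 x0 x1 g \<phi> lam y"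
  using Q_mono unfolding Qlam_def by (simp add: algebra_simps)

lemma G_mono: "y \<in> einterval d0 d1 \<Longrightarrow> x \<in> einterval d0 d1 \<Longrightarrow> y \<le> x \<Longrightarrow>
    Gfun d0 d1 x0 g y \<le> Gfun d0 d1 x0 g x"
proof -
  assume a: "y \<in> einterval d0 d1" "x \<in> einterval d0 d1" "y \<le> x"
  have "0 \<le> integral {y..x} (\<lambda>z. 1 / g z)"
  proof (rule int_nonneg_lb[OF LI1[OF a(1,2)]])
    fix z assume "z \<in> {y..x}"
    then have "z \<in> einterval d0 d1" using Icc_sub_einterval[OF a(1,2)] by auto
    then show "0 \<le> 1 / g z" using gpos by auto
  qed
  then show ?thesis using G_diff[OF a] by simp
qed

lemma P_mono: "y \<in> einterval d0 d1 \<Longrightarrow> x \<in> einterval d0 d1 \<Longrightarrow> y \<le> x \<Longrightarrow>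
    Qlam d0 d1 x0 x1 g \<phi> lam y \<le> Qlam d0 d1 x0 x1 g \<phi> lam x"
  using P_mono_G[of y x] G_mono[of y x] lam0 by (smt (verit) mult_nonneg_nonneg)

lemma G_deriv: "x \<in> einterval d0 d1 \<Longrightarrow> (Gfun d0 d1 x0 g has_real_derivative 1 / g x) (at x)"
proof -
  assume x: "x \<in> einterval d0 d1"
  obtain a b where ab: "a \<in> einterval d0 d1" "b \<in> einterval d0 d1" "a < x" "x < b"
    using around[OF x] by blast
  have "((\<lambda>u. integral {a..u} (\<lambda>z. 1 / g z)) has_real_derivative 1 / g x) (at x within {a..b})"
    by (rule integral_has_real_derivative[OF gcI[OF ab(1,2)]]) (use ab in auto)
  then have "((\<lambda>u. Gfun d0 d1 x0 g a + integral {a..u} (\<lambda>z. 1 / g z)) has_real_derivative 1 / g x) (at x)"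
    using ab by (auto simp: at_within_Icc_at intro!: derivative_eq_intros)
  then show ?thesis
  proof (rule has_field_derivative_transform_within_open[of _ _ _ "{a<..<b}"])
    fix u assume u: "u \<in> {a<..<b}"
    then have "u \<in> einterval d0 d1" using Icc_sub_einterval[OF ab(1,2)] by auto
    then show "Gfun d0 d1 x0 g a + integral {a..u} (\<lambda>z. 1 / g z) = Gfun d0 d1 x0 g u"
      using G_diff[OF ab(1), of u] u by auto
  qed (use ab in auto)
qed

lemma P_cont: "continuous_on (einterval d0 d1) (Qlam d0 d1 x0 x1 g \<phi> lam)"
proof (rule cont_int_E)
  show "hP integrable_on {a..b}" if "a \<in> einterval d0 d1" "b \<in> einterval d0 d1" for a b
    using set_borel_integral_eq_integral(1)[OF hP_int[OF that]] .
  show "Qlam d0 d1 x0 x1 g \<phi> lam u - Qlam d0 d1 x0 x1 g \<phi> lam a = integral {a..u} hP"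
    if "a \<in> einterval d0 d1" "u \<in> einterval d0 d1" "a \<le> u" for a u
    using P_diff[OF that] .
qed

end




lemma meas_id_leb[measurable]: "(\<lambda>x::real. x) \<in> borel_measurable lebesgue"
  by (rule measurable_completion) simp

lemma borel_to_leb: "f \<in> borel_measurable borel \<Longrightarrow> (f :: real \<Rightarrow> real) \<in> borel_measurable lebesgue"
  by (rule measurable_completion) simp

locale L2 = L +
  fixes v :: "real \<Rightarrow> real"
  assumes vi: "set_integrable lebesgue (einterval d0 d1) v"
begin

abbreviation "P \<equiv> Qlam d0 d1 x0 x1 g \<phi> lam"
definition w where "w y = exp (P y) * v y"
definition F where "F x = (LINT y:einterval d0 (ereal x)|lebesgue. w y)"

lemma gne: "x \<in> einterval d0 d1 \<Longrightarrow> g x \<noteq> 0" using gpos by force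

lemma mP[measurable]: "(\<lambda>y. indicator (einterval d0 d1) y * exp (P y)) \<in> borel_measurable lebesgue"
proof -
  have "continuous_on (einterval d0 d1) (\<lambda>y. exp (P y))" by (intro continuous_intros P_cont)
  from borel_measurable_continuous_on_indicator[OF _ this] show ?thesis
    by (intro borel_to_leb) simp
qed

lemma mA[measurable]: "(\<lambda>y. indicator (einterval d0 d1) y * (exp (- P y) / g y)) \<in> borel_measurable lebesgue"
proof -
  have "continuous_on (einterval d0 d1) (\<lambda>y. exp (- P y) / g y)"
    using gne by (intro continuous_intros P_cont gc) auto
  from borel_measurable_continuous_on_indicator[OF _ this] show ?thesis
    by (intro borel_to_leb) simp
qed

lemma mv[measurable]: "(\<lambda>y. indicator (einterval d0 d1) y * v y) \<in> borel_measurable lebesgue"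
  using vi unfolding set_integrable_def by auto

lemma vi': "integrable lebesgue (\<lambda>y. indicator (einterval d0 d1) y * v y)"
  using vi unfolding set_integrable_def by simp

lemma w_int:
  assumes S: "S \<in> sets lebesgue" "S \<subseteq> einterval d0 d1" and x: "x \<in> einterval d0 d1"
    and le: "\<forall>y\<in>S. y \<le> x"
  shows "set_integrable lebesgue S w"
  unfolding set_integrable_def
proof (rule Bochner_Integration.integrable_bound)
  show "integrable lebesgue (\<lambda>y. exp (P x) * (indicator (einterval d0 d1) y * v y))"
    using vi' by simp
  have "(\<lambda>y. indicator S y *\<^sub>R w y) = (\<lambda>y. indicator S y * ((indicator (einterval d0 d1) y * exp (P y)) * (indicator (einterval d0 d1) y * v y)))"
  proof
    fix y show "indicator S y *\<^sub>R w y = indicator S y * ((indicator (einterval d0 d1) y * exp (P y)) * (indicator (einterval d0 d1) y * v y))"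
      using S(2) by (cases "y \<in> S") (auto simp: w_def indicator_def)
  qed
  also have "\<dots> \<in> borel_measurable lebesgue" using S(1) by measurable
  finally show "(\<lambda>y. indicator S y *\<^sub>R w y) \<in> borel_measurable lebesgue" .
  show "AE y in lebesgue. norm (indicator S y *\<^sub>R w y) \<le> norm (exp (P x) * (indicator (einterval d0 d1) y * v y))"
  proof (rule AE_I2)
    fix y show "norm (indicator S y *\<^sub>R w y) \<le> norm (exp (P x) * (indicator (einterval d0 d1) y * v y))"
    proof (cases "y \<in> S")
      case True
      then have yE: "y \<in> einterval d0 d1" using S by auto
      have "P y \<le> P x" using P_mono[OF yE x] le True by auto
      then have "exp (P y) \<le> exp (P x)" by simp
      then show ?thesis using True yE by (auto simp: w_def abs_mult intro: mult_right_mono)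
    qed simp
  qed
qed

lemma einterval_sub: "x \<in> einterval d0 d1 \<Longrightarrow> einterval d0 (ereal x) \<subseteq> einterval d0 d1"
proof
  fix y assume "x \<in> einterval d0 d1" "y \<in> einterval d0 (ereal x)"
  then have "d0 < ereal y" "ereal y < ereal x" "ereal x < d1" by (auto simp: einterval_iff)
  then show "y \<in> einterval d0 d1" unfolding einterval_iff using less_trans by blast
qed

lemma F_diff:
  assumes a: "a \<in> einterval d0 d1" and u: "u \<in> einterval d0 d1" and au: "a \<le> u"
  shows "F u - F a = integral {a..u} w"
proof -
  have i1: "set_integrable lebesgue (einterval d0 (ereal a)) w"
    by (rule w_int[OF _ einterval_sub[OF a] a]) (auto simp: einterval_iff)
  have sub2: "{a..<u} \<subseteq> einterval d0 d1" using Icc_sub_einterval[OF a u] by auto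
  have i2: "set_integrable lebesgue {a..<u} w"
    by (rule w_int[OF _ sub2 u]) auto
  have d0a: "d0 < ereal a" using a by (simp add: einterval_iff)
  have "(\<lambda>y. indicator (einterval d0 (ereal u)) y *\<^sub>R w y) = (\<lambda>y. indicator (einterval d0 (ereal a)) y *\<^sub>R w y + indicator {a..<u} y *\<^sub>R w y)"
  proof
    fix y
    show "indicator (einterval d0 (ereal u)) y *\<^sub>R w y = indicator (einterval d0 (ereal a)) y *\<^sub>R w y + indicator {a..<u} y *\<^sub>R w y"
    proof (cases "y < a")
      case True
      then show ?thesis using au by (auto simp: indicator_def einterval_iff)
    next
      case False
      then have "d0 < ereal y" using d0a by (meson ereal_less_eq(3) not_less order.strict_trans2)
      then show ?thesis using False au by (auto simp: indicator_def einterval_iff)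
    qed
  qed
  then have "F u = F a + (LINT y:{a..<u}|lebesgue. w y)"
    unfolding F_def set_lebesgue_integral_def using i1 i2 unfolding set_integrable_def
    by (simp add: Bochner_Integration.integral_add)
  moreover have "(LINT y:{a..<u}|lebesgue. w y) = integral {a..<u} w"
    by (rule set_lebesgue_integral_eq_integral(2)[OF i2])
  moreover have "integral {a..<u} w = integral {a..u} w"
    by (rule integral_spike_set) (auto intro: negligible_subset[of "{u}"])
  ultimately show ?thesis by simp
qed

lemma w_abs: assumes "a \<in> einterval d0 d1" "b \<in> einterval d0 d1" shows "w absolutely_integrable_on {a..b}"
  by (rule w_int[OF _ Icc_sub_einterval[OF assms] assms(2)]) auto

lemma F_cont: "continuous_on (einterval d0 d1) F"
  by (rule cont_int_E[OF _ F_diff]) (auto intro: set_lebesgue_integral_eq_integral(1)[OF w_abs])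

lemma R_eq:
  assumes x: "x \<in> einterval d0 d1"
  shows "Rlam d0 d1 x0 x1 g \<phi> lam v x = exp (- P x) / g x * F x"
proof -
  have "Rlam d0 d1 x0 x1 g \<phi> lam v x = (LINT y|lebesgue. (exp (- P x) / g x) * (indicator (einterval d0 (ereal x)) y *\<^sub>R w y))"
    unfolding Rlam_def set_lebesgue_integral_def
  proof (rule Bochner_Integration.integral_cong[OF refl])
    fix y
    show "indicator (einterval d0 d1) y *\<^sub>R (indicator (einterval d0 (ereal x)) y * (exp (P y - P x) / g x) * v y) =
      exp (- P x) / g x * (indicator (einterval d0 (ereal x)) y *\<^sub>R w y)"
      using einterval_sub[OF x] by (auto simp: indicator_def w_def exp_diff field_simps exp_minus)
  qed
  also have "\<dots> = exp (- P x) / g x * F x"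
    unfolding F_def set_lebesgue_integral_def by simp
  finally show ?thesis .
qed

end




context L2 begin

lemma deriv_ae:
  "AE x in lebesgue. x \<in> einterval d0 d1 \<longrightarrow>
     ((\<lambda>y. g y * Rlam d0 d1 x0 x1 g \<phi> lam v y) has_real_derivative
        (v x - lam * Rlam d0 d1 x0 x1 g \<phi> lam v x - \<phi> x * Rlam d0 d1 x0 x1 g \<phi> lam v x)) (at x)"
proof -
  obtain N1 where N1: "negligible N1" "\<And>x. x \<in> einterval d0 d1 - N1 \<Longrightarrow> (F has_real_derivative w x) (at x)"
    using lebdiff_E[OF d01 w_abs F_diff] by blast
  obtain N2 where N2: "negligible N2" "\<And>x. x \<in> einterval d0 d1 - N2 \<Longrightarrow> (P has_real_derivative hP x) (at x)"
    using lebdiff_E[OF d01 lb2leb[OF hP_int] P_diff] by blast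
  have nul: "N1 \<union> N2 \<in> null_sets lebesgue" using N1(1) N2(1) negligible_iff_null_sets by auto
  show ?thesis
  proof (rule AE_I'[OF nul], rule subsetI)
    fix x assume xx: "x \<in> {x \<in> space lebesgue. \<not> (x \<in> einterval d0 d1 \<longrightarrow> ((\<lambda>y. g y * Rlam d0 d1 x0 x1 g \<phi> lam v y) has_real_derivative
        (v x - lam * Rlam d0 d1 x0 x1 g \<phi> lam v x - \<phi> x * Rlam d0 d1 x0 x1 g \<phi> lam v x)) (at x))}"
    then have xE: "x \<in> einterval d0 d1" and nd: "\<not> ((\<lambda>y. g y * Rlam d0 d1 x0 x1 g \<phi> lam v y) has_real_derivative
        (v x - lam * Rlam d0 d1 x0 x1 g \<phi> lam v x - \<phi> x * Rlam d0 d1 x0 x1 g \<phi> lam v x)) (at x)"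
      by auto
    show "x \<in> N1 \<union> N2"
    proof (rule ccontr)
      assume "x \<notin> N1 \<union> N2"
      then have nN1: "x \<notin> N1" and nN2: "x \<notin> N2" by auto
      have dF: "(F has_real_derivative w x) (at x)" using N1(2) xE nN1 by blast
      have dP: "(P has_real_derivative hP x) (at x)" using N2(2) xE nN2 by blast
      have de: "((\<lambda>y. exp (- P y)) has_real_derivative exp (- P x) * (- hP x)) (at x)"
        by (rule DERIV_chain2[OF DERIV_exp DERIV_minus[OF dP]])
      have dm: "((\<lambda>y. exp (- P y) * F y) has_real_derivative exp (- P x) * (- hP x) * F x + w x * exp (- P x)) (at x)"
        by (rule DERIV_mult[OF de dF])
      have gx: "g x \<noteq> 0" using gne[OF xE] .
      have ee: "exp (- P x) * exp (P x) = 1" by (simp add: exp_minus)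
      have val: "exp (- P x) * (- hP x) * F x + w x * exp (- P x) =
         v x - lam * Rlam d0 d1 x0 x1 g \<phi> lam v x - \<phi> x * Rlam d0 d1 x0 x1 g \<phi> lam v x"
      proof -
        have "w x * exp (- P x) = v x" using ee by (simp add: w_def algebra_simps)
        moreover have "exp (- P x) * (- hP x) * F x = - (lam * Rlam d0 d1 x0 x1 g \<phi> lam v x) - \<phi> x * Rlam d0 d1 x0 x1 g \<phi> lam v x"
          using gx by (simp add: R_eq[OF xE] hP_def field_simps)
        ultimately show ?thesis by simp
      qed
      have "((\<lambda>y. g y * Rlam d0 d1 x0 x1 g \<phi> lam v y) has_real_derivative
        (v x - lam * Rlam d0 d1 x0 x1 g \<phi> lam v x - \<phi> x * Rlam d0 d1 x0 x1 g \<phi> lam v x)) (at x)"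
      proof (rule has_field_derivative_transform_within_open[OF dm[unfolded val] open_einterval xE])
        fix y assume yE: "y \<in> einterval d0 d1"
        show "exp (- P y) * F y = g y * Rlam d0 d1 x0 x1 g \<phi> lam v y"
          using gne[OF yE] by (simp add: R_eq[OF yE])
      qed
      then show False using nd by blast
    qed
  qed
qed

lemma AC_part: "AC_on (einterval d0 d1) (\<lambda>x. g x * Rlam d0 d1 x0 x1 g \<phi> lam v x)"
  unfolding AC_on_def
proof (intro allI impI)
  fix a b assume a: "a \<in> einterval d0 d1" and b: "b \<in> einterval d0 d1" and ab: "a \<le> b"
  have sub: "{a..b} \<subseteq> einterval d0 d1" by (rule Icc_sub_einterval[OF a b])
  have acF: "abs_cont_on_interval a b F"
  proof (rule AC_int[OF w_abs[OF a b]])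
    fix s t assume "a \<le> s" "s \<le> t" "t \<le> b"
    then show "F t - F s = integral {s..t} w" using sub by (intro F_diff) auto
  qed
  have acP: "abs_cont_on_interval a b P"
  proof (rule AC_int[OF lb2leb[OF hP_int[OF a b]]])
    fix s t assume "a \<le> s" "s \<le> t" "t \<le> b"
    then show "P t - P s = integral {s..t} hP" using sub by (intro P_diff) auto
  qed
  have Pa: "\<And>x. x \<in> {a..b} \<Longrightarrow> - P x \<le> - P a" using P_mono[OF a] sub by auto
  have acE: "abs_cont_on_interval a b (\<lambda>x. exp (- P x))"
  proof (rule AC_lip[OF acP, of "exp (- P a)"])
    fix s t assume st: "s \<in> {a..b}" "t \<in> {a..b}"
    have "\<bar>exp (- P t) - exp (- P s)\<bar> \<le> exp (- P a) * \<bar>- P t - - P s\<bar>"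
      by (rule exp_lip) (use Pa st in auto)
    then show "\<bar>exp (- P t) - exp (- P s)\<bar> \<le> exp (- P a) * \<bar>P t - P s\<bar>" by (simp add: abs_minus_commute)
  qed simp
  have "compact (F ` {a..b})"
    by (rule compact_continuous_image[OF continuous_on_subset[OF F_cont sub]]) simp
  then obtain C where C: "\<forall>y\<in>F ` {a..b}. norm y \<le> C"
    using compact_imp_bounded bounded_iff by metis
  have "abs_cont_on_interval a b (\<lambda>x. exp (- P x) * F x)"
  proof (rule AC_mult[OF acE acF _ _ ab, of "max (exp (- P a)) C"])
    fix x assume "x \<in> {a..b}"
    then have "exp (- P x) \<le> exp (- P a)" using Pa by simp
    then show "\<bar>exp (- P x)\<bar> \<le> max (exp (- P a)) C" by (simp del: exp_le_cancel_iff)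
    have "\<bar>F x\<bar> \<le> C" using C \<open>x \<in> {a..b}\<close> by auto
    then show "\<bar>F x\<bar> \<le> max (exp (- P a)) C" by simp
  qed
  then show "abs_cont_on_interval a b (\<lambda>x. g x * Rlam d0 d1 x0 x1 g \<phi> lam v x)"
  proof (rule AC_cong[rotated])
    fix x assume "x \<in> {a..b}"
    then have xE: "x \<in> einterval d0 d1" using sub by auto
    show "exp (- P x) * F x = g x * Rlam d0 d1 x0 x1 g \<phi> lam v x"
      using gne[OF xE] by (simp add: R_eq[OF xE])
  qed
qed

end




context L begin

lemma gne0: "x \<in> einterval d0 d1 \<Longrightarrow> g x \<noteq> 0" using gpos by force

abbreviation "GG \<equiv> Gfun d0 d1 x0 g"

lemma G_cont: "continuous_on (einterval d0 d1) GG"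
  by (rule continuous_at_imp_continuous_on) (use G_deriv DERIV_continuous in blast)

lemma KG:
  assumes y: "y \<in> einterval d0 d1"
  shows "set_integrable lborel (einterval (ereal y) d1) (\<lambda>x. exp (- lam * (GG x - GG y)) * (1 / g x))"
    "(LINT x:einterval (ereal y) d1|lborel. exp (- lam * (GG x - GG y)) * (1 / g x)) \<le> 1 / lam"
proof -
  let ?k = "\<lambda>x. exp (- lam * (GG x - GG y)) * (1 / g x)"
  let ?H = "\<lambda>x. - exp (- lam * (GG x - GG y)) / lam"
  have yd1: "ereal y < d1" using y by (simp add: einterval_iff)
  obtain l u :: "nat \<Rightarrow> real" where approx:
    "einterval (ereal y) d1 = (\<Union>i. {l i .. u i})"
    "incseq u" "decseq l" "\<And>i. l i < u i" "\<And>i. ereal y < l i" "\<And>i. u i < d1"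
    "l \<longlonglongrightarrow> ereal y" "u \<longlonglongrightarrow> d1"
    by (rule einterval_Icc_approximation[OF yd1]) blast
  have d0y: "d0 < ereal y" using y by (simp add: einterval_iff)
  have subE: "einterval (ereal y) d1 \<subseteq> einterval d0 d1"
  proof
    fix x assume "x \<in> einterval (ereal y) d1"
    then have "ereal y < ereal x" "ereal x < d1" by (auto simp: einterval_iff)
    then show "x \<in> einterval d0 d1" using d0y unfolding einterval_iff using less_trans by blast
  qed
  have yl: "y < l i" for i using approx(5)[of i] by simp
  have lE: "l i \<in> einterval d0 d1" and uE: "u i \<in> einterval d0 d1" for i
  proof -
    have "l i \<in> einterval (ereal y) d1" "u i \<in> einterval (ereal y) d1" using approx(1) by (auto intro!: exI[of _ i] less_imp_le approx(4))
    then show "l i \<in> einterval d0 d1" "u i \<in> einterval d0 d1" using subE by auto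
  qed
  have kcont: "continuous_on (einterval d0 d1) ?k"
    using gne0 by (intro continuous_intros G_cont gc) auto
  have Hd: "(?H has_real_derivative ?k x) (at x)" if x: "x \<in> einterval d0 d1" for x
  proof -
    have "((\<lambda>x. exp (- lam * (GG x - GG y))) has_real_derivative exp (- lam * (GG x - GG y)) * (- lam * (1 / g x))) (at x)"
      by (rule DERIV_chain2[OF DERIV_exp]) (auto intro!: derivative_eq_intros G_deriv[OF x])
    then have "(?H has_real_derivative - (exp (- lam * (GG x - GG y)) * (- lam * (1 / g x))) / lam) (at x)"
      by (rule DERIV_cdivide[OF DERIV_minus])
    then show ?thesis using lam0 by (simp add: field_simps)
  qed
  have Hmono: "?H a \<le> ?H b" if "a \<in> einterval d0 d1" "b \<in> einterval d0 d1" "a \<le> b" for a b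
  proof -
    have "GG a \<le> GG b" by (rule G_mono[OF that])
    then have "exp (- lam * (GG b - GG y)) \<le> exp (- lam * (GG a - GG y))" using lam0 by (simp add: mult_left_mono)
    then show ?thesis using lam0 by (simp add: divide_right_mono)
  qed
  have FTC: "(LBINT x=l i..u i. ?k x) = ?H (u i) - ?H (l i)" for i
  proof (rule interval_integral_FTC_finite)
    have "min (l i) (u i) = l i" "max (l i) (u i) = u i" using approx(4)[of i] by auto
    then have "{min (l i) (u i)..max (l i) (u i)} = {l i..u i}" by simp
    moreover have "{l i..u i} \<subseteq> einterval d0 d1" by (rule Icc_sub_einterval[OF lE uE])
    ultimately have sub: "{min (l i) (u i)..max (l i) (u i)} \<subseteq> einterval d0 d1" by (simp only:)
    show "continuous_on {min (l i) (u i)..max (l i) (u i)} ?k" by (rule continuous_on_subset[OF kcont sub])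
    fix x assume "min (l i) (u i) \<le> x" "x \<le> max (l i) (u i)"
    then have "x \<in> einterval d0 d1" using sub by auto
    then show "(?H has_vector_derivative ?k x) (at x within {min (l i) (u i)..max (l i) (u i)})"
      using Hd has_real_derivative_iff_has_vector_derivative has_vector_derivative_at_within by blast
  qed
  define S where "S i = ?H (u i) - ?H (l i)" for i
  have Sinc: "incseq S" unfolding incseq_def S_def
  proof (intro allI impI)
    fix i j :: nat assume "i \<le> j"
    then have "u i \<le> u j" "l j \<le> l i" using approx(2,3) by (auto simp: incseq_def decseq_def)
    then show "?H (u i) - ?H (l i) \<le> ?H (u j) - ?H (l j)"
      using Hmono[OF uE uE, of i j] Hmono[OF lE lE, of j i] by linarith
  qed
  have Sb: "\<forall>i. S i \<le> 1 / lam"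
  proof
    fix i
    have "GG y \<le> GG (l i)" using G_mono[OF y lE] yl less_imp_le by blast
    then have "exp (- lam * (GG (l i) - GG y)) \<le> 1" using lam0 by simp
    then have "- ?H (l i) \<le> 1 / lam" using lam0 by (simp add: divide_right_mono)
    moreover have "?H (u i) \<le> 0" using lam0 by simp
    ultimately show "S i \<le> 1 / lam" unfolding S_def by linarith
  qed
  obtain C where C: "S \<longlonglongrightarrow> C" "\<forall>i. S i \<le> C" using incseq_convergent[OF Sinc Sb] by blast
  have C1: "C \<le> 1 / lam" by (rule LIMSEQ_le_const2[OF C(1)]) (use Sb in auto)
  have eq: "(\<lambda>i. LBINT x=l i..u i. ?k x) = S" unfolding S_def by (rule ext) (rule FTC)
  have lim: "(\<lambda>i. LBINT x=l i..u i. ?k x) \<longlonglongrightarrow> C" unfolding eq by (rule C(1))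
  have fi: "set_integrable lborel {l i..u i} ?k" for i
    unfolding set_integrable_def
    by (rule borel_integrable_compact) (simp, rule continuous_on_subset[OF kcont Icc_sub_einterval[OF lE uE]])
  have fnn: "AE x in lborel. ereal y < ereal x \<longrightarrow> ereal x < d1 \<longrightarrow> 0 \<le> ?k x"
  proof (rule AE_I2, intro impI)
    fix x assume "ereal y < ereal x" "ereal x < d1"
    then have "x \<in> einterval d0 d1" using subE by (auto simp: einterval_iff)
    then show "0 \<le> ?k x" using gpos by auto
  qed
  have fm: "set_borel_measurable lborel (einterval (ereal y) d1) ?k"
    unfolding set_borel_measurable_def
    using borel_measurable_continuous_on_indicator[OF _ continuous_on_subset[OF kcont subE]] by simp
  show "set_integrable lborel (einterval (ereal y) d1) ?k"
    by (rule interval_integral_Icc_approx_nonneg(1)[OF yd1 approx fi fnn fm lim])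
  have "(LBINT x=ereal y..d1. ?k x) = C"
    by (rule interval_integral_Icc_approx_nonneg(2)[OF yd1 approx fi fnn fm lim])
  then show "(LINT x:einterval (ereal y) d1|lborel. ?k x) \<le> 1 / lam"
  proof -
    have "ereal y \<le> d1" using yd1 by simp
    then show ?thesis using C1 \<open>(LBINT x=ereal y..d1. ?k x) = C\<close> by (simp add: interval_lebesgue_integral_def)
  qed
qed

abbreviation "PP \<equiv> Qlam d0 d1 x0 x1 g \<phi> lam"

lemma inner_bound:
  assumes y: "y \<in> einterval d0 d1"
  shows "(\<integral>\<^sup>+x. ennreal (indicator (einterval d0 d1) x * (exp (- PP x) / g x) * indicator {y<..} x) \<partial>lebesgue)
    \<le> ennreal (exp (- PP y) / lam)"
proof -
  let ?k = "\<lambda>x. exp (- lam * (GG x - GG y)) * (1 / g x)"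
  let ?h = "\<lambda>x. indicator (einterval (ereal y) d1) x * ?k x"
  let ?c = "exp (- PP y)"
  have hi: "integrable lborel ?h" using KG(1)[OF y] unfolding set_integrable_def by simp
  then have hm: "(\<lambda>x. ennreal (?h x)) \<in> borel_measurable lborel" by auto
  have h0: "0 \<le> ?h x" for x
  proof (cases "x \<in> einterval (ereal y) d1")
    case True
    then have "ereal y < ereal x" "ereal x < d1" by (auto simp: einterval_iff)
    moreover have "d0 < ereal y" using y by (simp add: einterval_iff)
    ultimately have "x \<in> einterval d0 d1" unfolding einterval_iff using less_trans by blast
    then show ?thesis using gpos by auto
  qed simp
  have pw: "ennreal (indicator (einterval d0 d1) x * (exp (- PP x) / g x) * indicator {y<..} x) \<le> ennreal (?c * ?h x)" for x
  proof (cases "x \<in> einterval d0 d1 \<and> y < x")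
    case True
    then have xE: "x \<in> einterval d0 d1" and yx: "y < x" by auto
    have xi: "x \<in> einterval (ereal y) d1" using xE yx by (auto simp: einterval_iff)
    have "lam * (GG x - GG y) \<le> PP x - PP y" by (rule P_mono_G[OF y xE]) (use yx in simp)
    then have "exp (- PP x) \<le> exp (- PP y + - lam * (GG x - GG y))" by simp
    also have "\<dots> = ?c * exp (- lam * (GG x - GG y))" by (rule exp_add)
    finally have "exp (- PP x) / g x \<le> ?c * exp (- lam * (GG x - GG y)) / g x"
      using gpos xE by (intro divide_right_mono) auto
    then show ?thesis using xE yx xi by (intro ennreal_leI) (simp add: indicator_def)
  qed (auto simp: indicator_def)
  have "(\<integral>\<^sup>+x. ennreal (indicator (einterval d0 d1) x * (exp (- PP x) / g x) * indicator {y<..} x) \<partial>lebesgue)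
    \<le> (\<integral>\<^sup>+x. ennreal (?c * ?h x) \<partial>lebesgue)"
    by (intro nn_integral_mono pw)
  also have "\<dots> = (\<integral>\<^sup>+x. ennreal ?c * ennreal (?h x) \<partial>lborel)"
    by (simp only: nn_integral_completion ennreal_mult'[OF exp_ge_zero])
  also have "\<dots> = ennreal ?c * (\<integral>\<^sup>+x. ennreal (?h x) \<partial>lborel)"
    by (rule nn_integral_cmult[OF hm])
  also have "(\<integral>\<^sup>+x. ennreal (?h x) \<partial>lborel) = ennreal (integral\<^sup>L lborel ?h)"
    by (rule nn_integral_eq_integral[OF hi]) (use h0 in auto)
  also have "integral\<^sup>L lborel ?h = (LINT x:einterval (ereal y) d1|lborel. ?k x)"
    by (simp add: set_lebesgue_integral_def)
  also have "ennreal ?c * ennreal (LINT x:einterval (ereal y) d1|lborel. ?k x) \<le> ennreal ?c * ennreal (1 / lam)"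
    using KG(2)[OF y] by (intro mult_left_mono ennreal_leI) auto
  also have "\<dots> = ennreal (?c / lam)" by (simp add: ennreal_mult'[symmetric] divide_inverse)
  finally show ?thesis .
qed

end




lemma sf_leb: "sigma_finite_measure (lebesgue :: real measure)"
proof
  obtain A :: "real set set" where A: "countable A" "A \<subseteq> sets lborel" "\<Union>A = space lborel" "\<forall>a\<in>A. emeasure lborel a \<noteq> \<infinity>"
    using lborel.sigma_finite_countable by blast
  show "\<exists>A. countable A \<and> A \<subseteq> sets (lebesgue :: real measure) \<and> \<Union>A = space lebesgue \<and> (\<forall>a\<in>A. emeasure lebesgue a \<noteq> \<infinity>)"
    using A by (intro exI[of _ A]) (auto simp: subset_eq)
qed

lemma psf_leb: "pair_sigma_finite (lebesgue :: real measure) (lebesgue :: real measure)"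
  by (simp add: pair_sigma_finite_def sf_leb)

context L2 begin

definition AA where "AA x = indicator (einterval d0 d1) x * (exp (- P x) / g x)"
definition BB where "BB y = indicator (einterval d0 d1) y * exp (P y)"
definition VV where "VV y = indicator (einterval d0 d1) y * v y"
definition KK where "KK x y = AA x * indicator {y<..} x * (BB y * VV y)"

lemma AAm[measurable]: "AA \<in> borel_measurable lebesgue" unfolding AA_def by (rule mA)
lemma BBm[measurable]: "BB \<in> borel_measurable lebesgue" unfolding BB_def by (rule mP)
lemma VVm[measurable]: "VV \<in> borel_measurable lebesgue" unfolding VV_def by (rule mv)

lemma KKm: "(\<lambda>p. KK (fst p) (snd p)) \<in> borel_measurable (lebesgue \<Otimes>\<^sub>M lebesgue)"
proof -
  have f1: "(\<lambda>p::real\<times>real. fst p) \<in> borel_measurable (lebesgue \<Otimes>\<^sub>M lebesgue)"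
    by (rule measurable_compose[OF measurable_fst meas_id_leb])
  have f2: "(\<lambda>p::real\<times>real. snd p) \<in> borel_measurable (lebesgue \<Otimes>\<^sub>M lebesgue)"
    by (rule measurable_compose[OF measurable_snd meas_id_leb])
  have a: "(\<lambda>p::real\<times>real. AA (fst p)) \<in> borel_measurable (lebesgue \<Otimes>\<^sub>M lebesgue)"
    by (rule measurable_compose[OF measurable_fst AAm])
  have b: "(\<lambda>p::real\<times>real. BB (snd p)) \<in> borel_measurable (lebesgue \<Otimes>\<^sub>M lebesgue)"
    by (rule measurable_compose[OF measurable_snd BBm])
  have c: "(\<lambda>p::real\<times>real. VV (snd p)) \<in> borel_measurable (lebesgue \<Otimes>\<^sub>M lebesgue)"
    by (rule measurable_compose[OF measurable_snd VVm])
  have "{p::real\<times>real \<in> space (lebesgue \<Otimes>\<^sub>M lebesgue). snd p < fst p} \<in> sets (lebesgue \<Otimes>\<^sub>M lebesgue)"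
    by (rule borel_measurable_less[OF f2 f1])
  then have d: "(\<lambda>p::real\<times>real. indicator {p \<in> space (lebesgue \<Otimes>\<^sub>M lebesgue). snd p < fst p} p :: real) \<in> borel_measurable (lebesgue \<Otimes>\<^sub>M lebesgue)"
    by (rule borel_measurable_indicator)
  have "(\<lambda>p. KK (fst p) (snd p)) = (\<lambda>p. AA (fst p) * indicator {p \<in> space (lebesgue \<Otimes>\<^sub>M lebesgue). snd p < fst p} p * (BB (snd p) * VV (snd p)))"
    by (auto simp: KK_def indicator_def space_pair_measure)
  also have "\<dots> \<in> borel_measurable (lebesgue \<Otimes>\<^sub>M lebesgue)"
    using a b c d by (intro borel_measurable_times)
  finally show ?thesis .
qed

lemma AA0: "0 \<le> AA x" unfolding AA_def using gpos by (auto simp: indicator_def)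
lemma BB0: "0 \<le> BB x" unfolding BB_def by (auto simp: indicator_def)

lemma eqR: "indicator (einterval d0 d1) x * Rlam d0 d1 x0 x1 g \<phi> lam v x = (LINT y|lebesgue. KK x y)"
proof (cases "x \<in> einterval d0 d1")
  case False
  then show ?thesis by (simp add: KK_def AA_def)
next
  case True
  have "(LINT y|lebesgue. KK x y) = AA x * (LINT y|lebesgue. indicator {y<..} x * (BB y * VV y))"
    unfolding KK_def by (simp add: mult.assoc)
  also have "(LINT y|lebesgue. indicator {y<..} x * (BB y * VV y)) = F x"
    unfolding F_def set_lebesgue_integral_def
  proof (rule Bochner_Integration.integral_cong[OF refl])
    fix y
    show "indicator {y<..} x * (BB y * VV y) = indicator (einterval d0 (ereal x)) y *\<^sub>R w y"
    proof (cases "y \<in> einterval d0 d1 \<and> y < x")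
      case True
      then have "y \<in> einterval d0 (ereal x)" by (auto simp: einterval_iff)
      then show ?thesis using True by (simp add: BB_def VV_def w_def)
    next
      case False
      then have "y \<notin> einterval d0 (ereal x)" using einterval_sub[OF \<open>x \<in> einterval d0 d1\<close>] by (auto simp: einterval_iff)
      then show ?thesis using False by (auto simp: BB_def VV_def indicator_def)
    qed
  qed
  finally show ?thesis using True by (simp add: R_eq AA_def)
qed

lemma L1_part:
  "set_integrable lebesgue (einterval d0 d1) (Rlam d0 d1 x0 x1 g \<phi> lam v) \<and>
   lam * (LINT x:einterval d0 d1|lebesgue. \<bar>Rlam d0 d1 x0 x1 g \<phi> lam v x\<bar>) \<le> (LINT x:einterval d0 d1|lebesgue. \<bar>v x\<bar>)"
proof -
  let ?R = "Rlam d0 d1 x0 x1 g \<phi> lam v"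
  let ?E = "einterval d0 d1"
  interpret PL: pair_sigma_finite "lebesgue::real measure" "lebesgue::real measure" by (rule psf_leb)
  interpret SL: sigma_finite_measure "lebesgue::real measure" by (rule sf_leb)
  define Kp where "Kp x y = AA x * indicator {y<..} x * (BB y * \<bar>VV y\<bar>)" for x y
  have Kabs: "\<bar>KK x y\<bar> = Kp x y" for x y
    unfolding KK_def Kp_def using AA0[of x] BB0[of y] by (simp add: abs_mult)
  have Kp0: "0 \<le> Kp x y" for x y using Kabs[of x y] by simp
  have KKc: "case_prod KK \<in> borel_measurable (lebesgue \<Otimes>\<^sub>M lebesgue)"
    using KKm by (simp add: case_prod_beta')
  have Rm: "(\<lambda>x. indicator ?E x * ?R x) \<in> borel_measurable lebesgue"
  proof -
    have "(\<lambda>x. LINT y|lebesgue. KK x y) \<in> borel_measurable lebesgue"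
      by (rule sigma_finite_measure.borel_measurable_lebesgue_integral[OF sf_leb KKc])
    then show ?thesis by (simp add: eqR)
  qed
  have Kpm: "case_prod (\<lambda>x y. ennreal (Kp x y)) \<in> borel_measurable (lebesgue \<Otimes>\<^sub>M lebesgue)"
  proof -
    have "(\<lambda>p. ennreal \<bar>KK (fst p) (snd p)\<bar>) \<in> borel_measurable (lebesgue \<Otimes>\<^sub>M lebesgue)"
      using KKm by measurable
    then show ?thesis by (simp add: Kabs case_prod_beta')
  qed
  have step1: "ennreal \<bar>indicator ?E x * ?R x\<bar> \<le> (\<integral>\<^sup>+y. ennreal (Kp x y) \<partial>lebesgue)" for x
  proof (cases "integrable lebesgue (KK x)")
    case True
    have "ennreal \<bar>indicator ?E x * ?R x\<bar> = ennreal (norm (integral\<^sup>L lebesgue (KK x)))" by (simp add: eqR)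
    also have "\<dots> \<le> (\<integral>\<^sup>+y. ennreal (norm (KK x y)) \<partial>lebesgue)"
      using integral_norm_bound_ennreal[OF True] by simp
    also have "\<dots> = (\<integral>\<^sup>+y. ennreal (Kp x y) \<partial>lebesgue)" by (simp add: Kabs)
    finally show ?thesis .
  next
    case False
    then have "integral\<^sup>L lebesgue (KK x) = 0" by (rule not_integrable_integral_eq)
    then show ?thesis by (simp add: eqR)
  qed
  have step3: "(\<integral>\<^sup>+x. ennreal (Kp x y) \<partial>lebesgue) \<le> ennreal (\<bar>VV y\<bar> / lam)" for y
  proof (cases "y \<in> ?E")
    case False
    then have "\<And>x. Kp x y = 0" by (simp add: Kp_def BB_def)
    then show ?thesis by simp
  next
    case True
    have am: "(\<lambda>x. ennreal (AA x * indicator {y<..} x)) \<in> borel_measurable lebesgue" by measurable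
    have c0: "0 \<le> BB y * \<bar>VV y\<bar>" using BB0[of y] by simp
    have "(\<integral>\<^sup>+x. ennreal (Kp x y) \<partial>lebesgue) = (\<integral>\<^sup>+x. ennreal (AA x * indicator {y<..} x) * ennreal (BB y * \<bar>VV y\<bar>) \<partial>lebesgue)"
      unfolding Kp_def using c0 by (simp only: ennreal_mult''[OF c0])
    also have "\<dots> = (\<integral>\<^sup>+x. ennreal (AA x * indicator {y<..} x) \<partial>lebesgue) * ennreal (BB y * \<bar>VV y\<bar>)"
      by (rule nn_integral_multc[OF am])
    also have "\<dots> \<le> ennreal (exp (- P y) / lam) * ennreal (BB y * \<bar>VV y\<bar>)"
      using inner_bound[OF True] by (intro mult_right_mono) (auto simp: AA_def)
    also have "\<dots> = ennreal (\<bar>VV y\<bar> / lam)"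
    proof -
      have f1: "exp (- P y) / lam * (BB y * \<bar>VV y\<bar>) = \<bar>VV y\<bar> / lam"
        using True by (simp add: BB_def exp_minus field_simps)
      have f2: "ennreal (exp (- P y) / lam) * ennreal (BB y * \<bar>VV y\<bar>) = ennreal (exp (- P y) / lam * (BB y * \<bar>VV y\<bar>))"
        by (rule ennreal_mult[symmetric]) (use lam0 c0 in auto)
      show ?thesis unfolding f2 f1 ..
    qed
    finally show ?thesis .
  qed
  have VVi: "integrable lebesgue VV" unfolding VV_def by (rule vi')
  have Vli: "integrable lebesgue (\<lambda>y. \<bar>VV y\<bar> / lam)" using VVi by auto
  have bound: "(\<integral>\<^sup>+x. ennreal \<bar>indicator ?E x * ?R x\<bar> \<partial>lebesgue) \<le> ennreal (LINT y|lebesgue. \<bar>VV y\<bar> / lam)"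
  proof -
    have "(\<integral>\<^sup>+x. ennreal \<bar>indicator ?E x * ?R x\<bar> \<partial>lebesgue) \<le> (\<integral>\<^sup>+x. (\<integral>\<^sup>+y. ennreal (Kp x y) \<partial>lebesgue) \<partial>lebesgue)"
      by (intro nn_integral_mono step1)
    also have "\<dots> = (\<integral>\<^sup>+y. (\<integral>\<^sup>+x. ennreal (Kp x y) \<partial>lebesgue) \<partial>lebesgue)"
      by (rule PL.Fubini'[OF Kpm, symmetric])
    also have "\<dots> \<le> (\<integral>\<^sup>+y. ennreal (\<bar>VV y\<bar> / lam) \<partial>lebesgue)"
      by (intro nn_integral_mono step3)
    also have "\<dots> = ennreal (LINT y|lebesgue. \<bar>VV y\<bar> / lam)"
      by (rule nn_integral_eq_integral[OF Vli]) (use lam0 in auto)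
    finally show ?thesis .
  qed
  have Ri: "integrable lebesgue (\<lambda>x. indicator ?E x * ?R x)"
  proof (rule integrableI_bounded[OF Rm])
    show "(\<integral>\<^sup>+x. ennreal (norm (indicator ?E x * ?R x)) \<partial>lebesgue) < \<infinity>"
      using bound by (simp add: le_less_trans)
  qed
  have "ennreal (LINT x|lebesgue. \<bar>indicator ?E x * ?R x\<bar>) = (\<integral>\<^sup>+x. ennreal \<bar>indicator ?E x * ?R x\<bar> \<partial>lebesgue)"
    by (rule nn_integral_eq_integral[symmetric]) (use Ri in auto)
  with bound have le1: "ennreal (LINT x|lebesgue. \<bar>indicator ?E x * ?R x\<bar>) \<le> ennreal (LINT y|lebesgue. \<bar>VV y\<bar> / lam)"
    by simp
  have nn: "0 \<le> (LINT y|lebesgue. \<bar>VV y\<bar> / lam)" by (rule integral_nonneg_AE) (use lam0 in auto)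
  have "(LINT x|lebesgue. \<bar>indicator ?E x * ?R x\<bar>) \<le> (LINT y|lebesgue. \<bar>VV y\<bar> / lam)"
    using le1 ennreal_le_iff[OF nn] by blast
  also have "\<dots> = (LINT y|lebesgue. \<bar>VV y\<bar>) / lam" by simp
  finally have ineq: "lam * (LINT x|lebesgue. \<bar>indicator ?E x * ?R x\<bar>) \<le> (LINT y|lebesgue. \<bar>VV y\<bar>)"
    using lam0 by (simp add: field_simps)
  have e1: "(LINT x:?E|lebesgue. \<bar>?R x\<bar>) = (LINT x|lebesgue. \<bar>indicator ?E x * ?R x\<bar>)"
    unfolding set_lebesgue_integral_def by (intro Bochner_Integration.integral_cong) (auto simp: indicator_def)
  have e2: "(LINT x:?E|lebesgue. \<bar>v x\<bar>) = (LINT y|lebesgue. \<bar>VV y\<bar>)"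
    unfolding set_lebesgue_integral_def VV_def by (intro Bochner_Integration.integral_cong) (auto simp: indicator_def)
  show ?thesis
    using Ri ineq unfolding e1 e2 set_integrable_def by simp
qed

end



theorem lemma4p3:
  fixes d0 d1 :: ereal and g \<phi> :: "real \<Rightarrow> real" and x0 x1 lam :: real
  defines "E \<equiv> einterval d0 d1"
  defines "R \<equiv> Rlam d0 d1 x0 x1 g \<phi> lam"
  assumes "d0 < d1"
    and "continuous_on E g" and "\<forall>x\<in>E. 0 < g x"
    and "\<phi> \<in> borel_measurable borel" and "\<forall>x\<in>E. 0 \<le> \<phi> x"
    and "\<forall>K. compact K \<and> K \<subseteq> E \<longrightarrow> set_integrable lborel K \<phi>"
    and "x0 \<in> E" and "x1 \<in> E"
    and "0 < lam"
  shows "\<forall>v. set_integrable lebesgue E v \<longrightarrow>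
           set_integrable lebesgue E (R v) \<and>
           lam * (LINT x:E|lebesgue. \<bar>R v x\<bar>) \<le> (LINT x:E|lebesgue. \<bar>v x\<bar>) \<and>
           AC_on E (\<lambda>x. g x * R v x) \<and>
           (AE x in lebesgue. x \<in> E \<longrightarrow>
              ((\<lambda>y. g y * R v y) has_real_derivative (v x - lam * R v x - \<phi> x * R v x)) (at x))"
  proof -
  interpret L d0 d1 g \<phi> x0 x1 lam
    using assms unfolding E_def by unfold_locales auto
  show ?thesis
  proof (intro allI impI)
    fix v :: "real \<Rightarrow> real" assume vi: "set_integrable lebesgue E v"
    interpret L2 d0 d1 g \<phi> x0 x1 lam v
      using vi unfolding E_def by unfold_locales
    show "set_integrable lebesgue E (R v) \<and>
           lam * (LINT x:E|lebesgue. \<bar>R v x\<bar>) \<le> (LINT x:E|lebesgue. \<bar>v x\<bar>) \<and>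
           AC_on E (\<lambda>x. g x * R v x) \<and>
           (AE x in lebesgue. x \<in> E \<longrightarrow>
              ((\<lambda>y. g y * R v y) has_real_derivative (v x - lam * R v x - \<phi> x * R v x)) (at x))"
      unfolding E_def R_def using L1_part AC_part deriv_ae by blast
  qed
qed

end
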